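(* Let $q=p^\ell$ be a prime power with $p$ prime, let $n,d,k$ be positive integers, and write $d+1=s\cdot(q-q/p)+r$ with integers $s\ge0$ and $0\leq r<q-q/p$. If $h:\mathbb{F}_q^k\to\mathbb{F}_q$ satisfies (i) $\deg(h)\leq(q-1)k-(d+1)$, and (ii) for every integer $r'$ with $r\leq r'\leq q-1$, $h$ contains the monomial $\left(\prod_{i=1}^{s}x_i^{q/p-1}\right)x_{s+1}^{q-1-r'}\left(\prod_{j=s+2}^{k}x_j^{q-1}\right)$, then $\mathrm{RM}[n,q,d]=\mathcal{F}_n(h)$.
   Context: Functions $\mathbb{F}_q^m\to\mathbb{F}_q$ are identified with their unique polynomial representations $\sum_{e\in\{0,\dots,q-1\}^m}C_ex^e$; $h$ "contains" $x^e$ if $C_e\ne0$; the degree is the maximal $|e|_1$ with $C_e\neq0$. $\mathrm{RM}[n,q,d]$ is the set of functions $\mathbb{F}_q^n\to\mathbb{F}_q$ of degree at most $d$. For $f,g:\mathbb{F}_q^k\to\mathbb{F}_q$, $\langle f,g\rangle=\sum_{\alpha\in\mathbb{F}_q^k}f(\alpha)g(\alpha)$. Let $\mathcal{T}_{n,k}$ be the set of affine maps $T:\mathbb{F}_q^k\to\mathbb{F}_q^n$, and $f\circ T(x)=f(T(x))$ for $x\in\mathbb{F}_q^k$. For $h:\mathbb{F}_q^k\to\mathbb{F}_q$, $\mathcal{F}_n(h)=\{f:\mathbb{F}_q^n\to\mathbb{F}_q : \langle f\circ T,h\rangle=0\ \forall T\in\mathcal{T}_{n,k}\}$. *)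

theory Defs
  imports Main "HOL-Library.FuncSet" "HOL-Library.Cardinality" "HOL-Computational_Algebra.Primes"
begin

text \<open>Vectors of F_q^m are modelled as functions nat => 'a that vanish outside {0..<m}.\<close>
definition vecs :: "nat \<Rightarrow> (nat \<Rightarrow> 'a::field) set" where
  "vecs m = {x. \<forall>i\<ge>m. x i = 0}"

definition funs :: "nat \<Rightarrow> ((nat \<Rightarrow> 'a::field) \<Rightarrow> 'a) set" where
  "funs m = vecs m \<rightarrow>\<^sub>E UNIV"

definition exps :: "'a::{field,finite} itself \<Rightarrow> nat \<Rightarrow> (nat \<Rightarrow> nat) set" where
  "exps (TYPE('a)) m = {e. (\<forall>i<m. e i \<le> CARD('a) - 1) \<and> (\<forall>i\<ge>m. e i = 0)}"

definition mono :: "nat \<Rightarrow> (nat \<Rightarrow> nat) \<Rightarrow> (nat \<Rightarrow> 'a::field) \<Rightarrow> 'a" where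
  "mono m e x = (\<Prod>i<m. x i ^ e i)"

definition coeffs :: "nat \<Rightarrow> ((nat \<Rightarrow> 'a::{field,finite}) \<Rightarrow> 'a) \<Rightarrow> (nat \<Rightarrow> nat) \<Rightarrow> 'a" where
  "coeffs m h = (THE C. (\<forall>e. e \<notin> exps TYPE('a) m \<longrightarrow> C e = 0) \<and>
      (\<forall>x\<in>vecs m. h x = (\<Sum>e\<in>exps TYPE('a) m. C e * mono m e x)))"

definition contains :: "nat \<Rightarrow> ((nat \<Rightarrow> 'a::{field,finite}) \<Rightarrow> 'a) \<Rightarrow> (nat \<Rightarrow> nat) \<Rightarrow> bool" where
  "contains m h e \<longleftrightarrow> coeffs m h e \<noteq> 0"

text \<open>Degree: maximal |e|_1 with C_e nonzero (the zero function gets degree 0 by convention).\<close>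
definition deg :: "nat \<Rightarrow> ((nat \<Rightarrow> 'a::{field,finite}) \<Rightarrow> 'a) \<Rightarrow> nat" where
  "deg m h = Max (insert 0 {(\<Sum>i<m. e i) | e. e \<in> exps TYPE('a) m \<and> coeffs m h e \<noteq> 0})"

definition RM :: "nat \<Rightarrow> nat \<Rightarrow> ((nat \<Rightarrow> 'a::{field,finite}) \<Rightarrow> 'a) set" where
  "RM n d = {f \<in> funs n. deg n f \<le> d}"

definition inner :: "nat \<Rightarrow> ((nat \<Rightarrow> 'a::{field,finite}) \<Rightarrow> 'a) \<Rightarrow> ((nat \<Rightarrow> 'a) \<Rightarrow> 'a) \<Rightarrow> 'a" where
  "inner k f g = (\<Sum>\<alpha>\<in>vecs k. f \<alpha> * g \<alpha>)"

definition affine :: "nat \<Rightarrow> nat \<Rightarrow> (nat \<Rightarrow> nat \<Rightarrow> 'a::field) \<Rightarrow> (nat \<Rightarrow> 'a) \<Rightarrow> (nat \<Rightarrow> 'a) \<Rightarrow> (nat \<Rightarrow> 'a)" where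
  "affine n k A b x = (\<lambda>i. if i < n then (\<Sum>j<k. A i j * x j) + b i else 0)"

definition affine_maps :: "nat \<Rightarrow> nat \<Rightarrow> ((nat \<Rightarrow> 'a::field) \<Rightarrow> (nat \<Rightarrow> 'a)) set" where
  "affine_maps n k = {affine n k A b | A b. True}"

definition Fam :: "nat \<Rightarrow> nat \<Rightarrow> ((nat \<Rightarrow> 'a::{field,finite}) \<Rightarrow> 'a) \<Rightarrow> ((nat \<Rightarrow> 'a) \<Rightarrow> 'a) set" where
  "Fam n k h = {f \<in> funs n. \<forall>T\<in>affine_maps n k. inner k (f \<circ> T) h = 0}"

end

theory Submission
  imports Defs "HOL-Computational_Algebra.Polynomial"
begin
lemma card_ge2: "2 \<le> CARD('a::{field,finite})"
proof -
  have "card {0::'a, 1} = 2" by simp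
  moreover have "card {0::'a, 1} \<le> CARD('a)" by (rule card_mono) auto
  ultimately show ?thesis by simp
qed

lemma ofnat_card: "of_nat CARD('a) = (0::'a::{field,finite})"
proof -
  have "(\<Sum>x\<in>(UNIV::'a set). x + 1) = (\<Sum>x\<in>UNIV. x)"
    by (rule sum.reindex_bij_witness[of _ "\<lambda>x. x - 1" "\<lambda>x. x + 1"]) auto
  moreover have "(\<Sum>x\<in>(UNIV::'a set). x + 1) = (\<Sum>x\<in>UNIV. x) + of_nat CARD('a)"
    by (simp add: sum.distrib)
  ultimately show ?thesis by simp
qed

lemma pow_q1:
  fixes x :: "'a::{field,finite}"
  assumes "x \<noteq> 0" shows "x ^ (CARD('a) - 1) = 1"
proof -
  have "(\<Prod>y\<in>UNIV-{0}. x * y) = x ^ card (UNIV - {0::'a}) * (\<Prod>y\<in>UNIV-{0}. y)"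
    by (simp add: prod.distrib)
  also have "card (UNIV - {0::'a}) = CARD('a) - 1"
    by (simp add: card_Diff_singleton)
  also have "(\<Prod>y\<in>UNIV-{0}. x * y) = (\<Prod>y\<in>UNIV-{0::'a}. y)"
    by (rule prod.reindex_bij_witness[of _ "\<lambda>y. y / x" "\<lambda>y. x * y"]) (use assms in auto)
  finally have "(\<Prod>y\<in>UNIV-{0::'a}. y) * 1 = (\<Prod>y\<in>UNIV-{0::'a}. y) * x ^ (CARD('a) - 1)"
    by (simp add: mult.commute)
  moreover have "(\<Prod>y\<in>UNIV-{0::'a}. y) \<noteq> 0" by simp
  ultimately show ?thesis by (metis mult_left_cancel)
qed

lemma pow_q1':
  fixes x :: "'a::{field,finite}"
  assumes "x \<noteq> 0" shows "x ^ (CARD('a) - Suc 0) = 1"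
  using pow_q1[OF assms] by simp

lemma exists_nonroot:
  assumes "0 < m" "m < CARD('a::{field,finite}) - 1"
  shows "\<exists>c::'a. c \<noteq> 0 \<and> c ^ m \<noteq> 1"
proof (rule ccontr)
  assume H: "\<not> ?thesis"
  define P :: "'a poly" where "P = monom 1 m - 1"
  have cm: "coeff P m = 1" using assms by (simp add: P_def)
  hence P0: "P \<noteq> 0" by auto
  have dP: "degree P \<le> m" unfolding P_def
    by (metis degree_diff_le degree_monom_le degree_1 le0 le_trans)
  have "UNIV - {0} \<subseteq> {x. poly P x = 0}"
    using H by (auto simp: P_def poly_monom)
  hence "card (UNIV - {0::'a}) \<le> card {x. poly P x = 0}"
    by (rule card_mono[rotated]) simp
  also have "\<dots> \<le> m" using card_poly_roots_bound[OF P0] dP by linarith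
  finally show False using assms by (simp add: card_Diff_singleton)
qed

lemma powsum:
  "(\<Sum>x\<in>(UNIV::'a::{field,finite} set). x ^ m) = (if 0 < m \<and> (CARD('a) - 1) dvd m then -1 else 0)"
proof (cases "m = 0")
  case True thus ?thesis by (simp add: ofnat_card)
next
  case m0: False
  show ?thesis
  proof (cases "(CARD('a) - 1) dvd m")
    case True
    then obtain t where t: "m = (CARD('a) - 1) * t" by auto
    have "(\<Sum>x\<in>(UNIV::'a set). x ^ m) = (\<Sum>x\<in>UNIV - {0}. x ^ m) + 0 ^ m"
      by (subst sum.remove[of _ 0]) auto
    also have "\<dots> = (\<Sum>x\<in>UNIV - {0::'a}. 1)"
    proof -
      have "0 ^ m = (0::'a)" using m0 by simp
      moreover have "(\<Sum>x\<in>UNIV - {0::'a}. x ^ m) = (\<Sum>x\<in>UNIV - {0::'a}. 1)"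
        by (rule sum.cong) (auto simp: t power_mult, metis One_nat_def pow_q1 power_one)
      ultimately show ?thesis by simp
    qed
    also have "\<dots> = of_nat (CARD('a) - 1)" by (simp add: card_Diff_singleton)
    also have "\<dots> = -1" using card_ge2[where 'a='a] by (simp add: of_nat_diff ofnat_card)
    finally have eq: "(\<Sum>x\<in>(UNIV::'a set). x ^ m) = -1" .
    have c: "0 < m \<and> (CARD('a) - 1) dvd m" using True m0 by simp
    show ?thesis unfolding if_P[OF c] by (rule eq)
  next
    case False
    define m' where "m' = m mod (CARD('a) - 1)"
    have "0 < m'" using False unfolding m'_def by (metis gr0I mod_0_imp_dvd)
    moreover have "m' < CARD('a) - 1" unfolding m'_def using card_ge2[where 'a='a]
      by (intro mod_less_divisor) simp
    ultimately obtain c :: 'a where c: "c \<noteq> 0" "c ^ m' \<noteq> 1" using exists_nonroot by blast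
    have cm: "c ^ m = c ^ m'"
    proof -
      have "m = (CARD('a) - 1) * (m div (CARD('a) - 1)) + m'" unfolding m'_def by simp
      hence "c ^ m = (c ^ (CARD('a) - 1)) ^ (m div (CARD('a) - 1)) * c ^ m'"
        by (metis power_add power_mult)
      thus ?thesis using c by (simp add: pow_q1')
    qed
    have "(\<Sum>x\<in>(UNIV::'a set). (c * x) ^ m) = (\<Sum>x\<in>UNIV. x ^ m)"
      by (rule sum.reindex_bij_witness[of _ "\<lambda>y. y / c" "\<lambda>y. c * y"]) (use c in auto)
    moreover have "(\<Sum>x\<in>(UNIV::'a set). (c * x) ^ m) = c ^ m * (\<Sum>x\<in>UNIV. x ^ m)"
      by (simp add: power_mult_distrib sum_distrib_left)
    ultimately have "(c ^ m - 1) * (\<Sum>x\<in>(UNIV::'a set). x ^ m) = 0"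
      by (simp add: algebra_simps)
    thus ?thesis using c cm False by simp
  qed
qed

definition lep :: "nat \<Rightarrow> nat \<Rightarrow> nat \<Rightarrow> bool" where
  "lep p u c \<longleftrightarrow> (\<forall>t. u div p ^ t mod p \<le> c div p ^ t mod p)"

lemma lep_rec:
  assumes "p > 0"
  shows "lep p u c \<longleftrightarrow> (u mod p \<le> c mod p \<and> lep p (u div p) (c div p))"
proof
  assume H: "lep p u c"
  have "u div p ^ 0 mod p \<le> c div p ^ 0 mod p" using H unfolding lep_def by blast
  moreover have "lep p (u div p) (c div p)" unfolding lep_def
  proof
    fix t
    have "u div p ^ Suc t mod p \<le> c div p ^ Suc t mod p" using H unfolding lep_def by blast
    thus "u div p div p ^ t mod p \<le> c div p div p ^ t mod p"
      by (simp add: div_mult2_eq)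
  qed
  ultimately show "u mod p \<le> c mod p \<and> lep p (u div p) (c div p)" by simp
next
  assume H: "u mod p \<le> c mod p \<and> lep p (u div p) (c div p)"
  show "lep p u c" unfolding lep_def
  proof
    fix t show "u div p ^ t mod p \<le> c div p ^ t mod p"
    proof (cases t)
      case 0 thus ?thesis using H by simp
    next
      case (Suc t')
      have "u div p div p ^ t' mod p \<le> c div p div p ^ t' mod p" using H unfolding lep_def by blast
      thus ?thesis using Suc by (simp add: div_mult2_eq)
    qed
  qed
qed

lemma lep_refl: "lep p c c" unfolding lep_def by simp
lemma lep_0: "lep p 0 c" unfolding lep_def by simp

lemma lep_le:
  assumes "p > 1" "lep p u c" shows "u \<le> c"
  using assms(2)
proof (induction u arbitrary: c rule: less_induct)
  case (less u)
  show ?case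
  proof (cases "u = 0")
    case True thus ?thesis by simp
  next
    case False
    have p0: "0 < p" using assms(1) by simp
    have HH: "u mod p \<le> c mod p \<and> lep p (u div p) (c div p)" using lep_rec[OF p0, of u c] less.prems by blast
    hence H: "u mod p \<le> c mod p" "lep p (u div p) (c div p)" by blast+
    have "u div p < u" using False assms(1) by simp
    hence "u div p \<le> c div p" using less.IH H(2) by blast
    hence a: "p * (u div p) \<le> p * (c div p)" by simp
    have "u = p * (u div p) + u mod p" by simp
    also have "\<dots> \<le> p * (c div p) + c mod p" using a H(1) by linarith
    also have "\<dots> = c" by simp
    finally show ?thesis .
  qed
qed

lemma choose_small_nz:
  assumes "prime p" "c0 < p" "CHAR('a::comm_semiring_1) = p" "u0 \<le> c0"
  shows "of_nat (c0 choose u0) \<noteq> (0::'a)"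
proof
  assume "of_nat (c0 choose u0) = (0::'a)"
  hence "p dvd (c0 choose u0)" using of_nat_eq_0_iff_char_dvd assms(3) by metis
  hence "p dvd fact c0" using binomial_fact_lemma[OF assms(4)] by (metis dvd_mult)
  thus False using prime_dvd_fact_iff[OF assms(1)] assms(2) by simp
qed

lemma cbin:
  "coeff ((monom (1::'a::comm_semiring_1) 1 + 1) ^ n) i = of_nat (n choose i)"
proof -
  have "(monom (1::'a) 1 + 1) ^ n = (\<Sum>k\<le>n. of_nat (n choose k) * monom 1 1 ^ k * 1 ^ (n - k))"
    by (rule binomial_ring)
  also have "\<dots> = (\<Sum>k\<le>n. monom (of_nat (n choose k)) k)"
    by (intro sum.cong refl) (simp add: monom_power of_nat_poly smult_monom)
  finally have "coeff ((monom (1::'a) 1 + 1) ^ n) i = (\<Sum>k\<le>n. coeff (monom (of_nat (n choose k)) k) i)"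
    by (simp add: coeff_sum)
  also have "\<dots> = (\<Sum>k\<le>n. if k = i then of_nat (n choose k) else 0)"
    by (intro sum.cong refl) (simp add: coeff_monom)
  also have "\<dots> = of_nat (n choose i)" by (simp add: binomial_eq_0)
  finally show ?thesis .
qed

lemma cbin': "coeff ((monom (1::'a::comm_semiring_1) (Suc 0) + 1) ^ n) i = of_nat (n choose i)"
  using cbin[of n i] by simp

lemma lucas_step:
  assumes "prime p" "CHAR('a::comm_semiring_1) = p" "c0 < p" "u0 < p"
  shows "(of_nat ((p*c1 + c0) choose (p*u1 + u0)) :: 'a) = of_nat (c1 choose u1) * of_nat (c0 choose u0)"
proof -
  define X :: "'a poly" where "X = monom 1 1"
  have charp: "prime CHAR('a poly)" using assms by simp
  have fr: "(X + 1) ^ p = monom 1 p + 1"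
    using freshmans_dream[OF charp, of p X 1] assms(2) by (simp add: X_def monom_power)
  have "(X + 1) ^ (p*c1 + c0) = ((X + 1) ^ p) ^ c1 * (X + 1) ^ c0"
    by (simp add: power_add power_mult)
  also have "((X + 1) ^ p) ^ c1 = (\<Sum>i\<le>c1. of_nat (c1 choose i) * monom 1 p ^ i * 1 ^ (c1 - i))"
    unfolding fr by (rule binomial_ring)
  finally have E: "(X + 1) ^ (p*c1 + c0) = (\<Sum>i\<le>c1. monom (of_nat (c1 choose i)) (p * i) * (X + 1) ^ c0)"
    by (simp add: sum_distrib_right monom_power of_nat_poly smult_monom)
  define N where "N = p*u1 + u0"
  have "(of_nat ((p*c1 + c0) choose N) :: 'a) = coeff ((X + 1) ^ (p*c1 + c0)) N"
    by (simp add: cbin' X_def)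
  also have "\<dots> = (\<Sum>i\<le>c1. if N < p * i then 0 else of_nat (c1 choose i) * of_nat (c0 choose (N - p * i)))"
    unfolding E coeff_sum by (intro sum.cong refl) (simp add: coeff_monom_mult cbin' X_def)
  also have "\<dots> = (\<Sum>i\<le>c1. if i = u1 then of_nat (c1 choose u1) * of_nat (c0 choose u0) else 0)"
  proof (intro sum.cong refl)
    fix i assume "i \<in> {..c1}"
    show "(if N < p * i then 0 else of_nat (c1 choose i) * of_nat (c0 choose (N - p * i))) =
          (if i = u1 then of_nat (c1 choose u1) * of_nat (c0 choose u0) else (0::'a))"
    proof (cases "i = u1")
      case True thus ?thesis by (simp add: N_def)
    next
      case False
      show ?thesis
      proof (cases "i < u1")
        case True
        then obtain d where d: "u1 = i + Suc d" using less_imp_Suc_add[OF True] by auto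
        have "N - p * i = p * Suc d + u0" unfolding N_def d by (simp add: algebra_simps)
        moreover have "p \<le> p * Suc d" by simp
        ultimately have "c0 < N - p * i" using assms(3) by linarith
        thus ?thesis using False by (simp add: binomial_eq_0)
      next
        case F2: False
        hence "Suc u1 \<le> i" using False by simp
        hence "p * Suc u1 \<le> p * i" by (rule mult_le_mono2)
        hence "N < p * i" unfolding N_def using assms(4) by simp
        thus ?thesis using False by simp
      qed
    qed
  qed
  also have "\<dots> = of_nat (c1 choose u1) * of_nat (c0 choose u0)"
    by (cases "u1 \<le> c1") (auto simp: binomial_eq_0)
  finally show ?thesis unfolding N_def .
qed

lemma lucas:
  assumes "prime p" "CHAR('a::idom) = p" "lep p u c"
  shows "(of_nat (c choose u) :: 'a) \<noteq> 0"
  using assms(3)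
proof (induction u arbitrary: c rule: less_induct)
  case (less u)
  have p1: "p > 1" using assms(1) prime_gt_1_nat by blast
  show ?case
  proof (cases "u = 0")
    case True thus ?thesis by simp
  next
    case False
    have p0: "0 < p" using p1 by simp
    have HH: "u mod p \<le> c mod p \<and> lep p (u div p) (c div p)" using lep_rec[OF p0, of u c] less.prems by blast
    hence H: "u mod p \<le> c mod p" "lep p (u div p) (c div p)" by blast+
    have "u div p < u" using False p1 by simp
    hence IH: "(of_nat (c div p choose u div p) :: 'a) \<noteq> 0" using less.IH H(2) by blast
    have "(of_nat (c choose u) :: 'a) = of_nat ((p * (c div p) + c mod p) choose (p * (u div p) + u mod p))"
      by simp
    also have "\<dots> = of_nat (c div p choose u div p) * of_nat (c mod p choose u mod p)"
      by (rule lucas_step) (use assms p1 in auto)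
    finally show ?thesis using IH choose_small_nz[OF assms(1) _ assms(2) H(1)] p1 by simp
  qed
qed

lemma lep_case1:
  assumes "p > 1" "p * (c div p) < w" "w \<le> c"
  shows "lep p w c"
proof -
  define a where "a = c div p"
  define \<delta> where "\<delta> = w - p * a"
  have cm: "c = p * a + c mod p" unfolding a_def by simp
  have w: "w = p * a + \<delta>" using assms(2) unfolding \<delta>_def a_def by simp
  have "\<delta> \<le> c mod p" using assms(3) w cm by linarith
  moreover have "c mod p < p" using assms(1) by simp
  ultimately have dp: "\<delta> < p" by simp
  have "w mod p = \<delta>" using dp w by simp
  moreover have "w div p = a" using dp w assms(1) by simp
  ultimately show ?thesis using lep_rec[of p w c] assms(1) \<open>\<delta> \<le> c mod p\<close> lep_refl a_def by simp
qed

lemma partial: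
  assumes "p > 1"
  shows "c < p ^ Suc j \<Longrightarrow> 0 < w \<Longrightarrow> w \<le> c \<Longrightarrow> \<exists>u. lep p u c \<and> w \<le> u \<and> u < w + p ^ j"
proof (induction j arbitrary: c w)
  case 0
  have "c div p = 0" using "0.prems"(1) by simp
  hence "lep p w c" using lep_case1[OF assms] "0.prems" by simp
  thus ?case by auto
next
  case (Suc j)
  show ?case
  proof (cases "p * (c div p) < w")
    case True
    hence "lep p w c" using lep_case1[OF assms] Suc.prems by simp
    moreover have "0 < p ^ Suc j" using assms by simp
    ultimately show ?thesis by (intro exI[of _ w]) auto
  next
    case False
    define c1 where "c1 = c div p"
    define w1 where "w1 = (w + p - 1) div p"
    have c1b: "c1 < p ^ Suc j"
      using Suc.prems(1) assms unfolding c1_def by (simp add: less_mult_imp_div_less mult.commute)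
    have pw1: "p * w1 \<le> w + p - 1" unfolding w1_def by simp
    have pw1': "w \<le> p * w1"
    proof -
      have "w + p - 1 = p * w1 + (w + p - 1) mod p" unfolding w1_def by simp
      moreover have "(w + p - 1) mod p < p" using assms by simp
      ultimately show ?thesis by linarith
    qed
    have w1pos: "0 < w1" using pw1' Suc.prems(2) by (cases w1) auto
    have w1c1: "w1 \<le> c1"
    proof -
      have "p * w1 \<le> w + p - 1" by (rule pw1)
      also have "\<dots> < p * c1 + p" using False assms unfolding c1_def by linarith
      finally have "p * w1 < p * Suc c1" by simp
      thus ?thesis by (simp only: mult_less_cancel1) simp
    qed
    obtain u1 where u1: "lep p u1 c1" "w1 \<le> u1" "u1 < w1 + p ^ j"
      using Suc.IH[OF c1b w1pos w1c1] by blast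
    have "lep p (p * u1) c"
      using lep_rec[of p "p * u1" c] assms u1(1) unfolding c1_def by simp
    moreover have "w \<le> p * u1" using pw1' u1(2) by (meson le_trans mult_le_mono2)
    moreover have "p * u1 < w + p ^ Suc j"
    proof -
      have "Suc u1 \<le> w1 + p ^ j" using u1(3) by simp
      hence "p * Suc u1 \<le> p * (w1 + p ^ j)" by (rule mult_le_mono2)
      hence "p * u1 + p \<le> p * w1 + p ^ Suc j" by (simp add: algebra_simps)
      thus ?thesis using pw1 assms by linarith
    qed
    ultimately show ?thesis by blast
  qed
qed

lemma excess:
  assumes "p > 1"
  shows "L < p ^ j \<Longrightarrow> lep p L (a * p ^ j + L)"
proof (induction j arbitrary: L)
  case 0 thus ?case using lep_0 by simp
next
  case (Suc j)
  have e: "a * p ^ Suc j + L = L + (a * p ^ j) * p" by (simp add: algebra_simps)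
  have m: "(a * p ^ Suc j + L) mod p = L mod p" unfolding e by (rule mod_mult_self1)
  have d: "(a * p ^ Suc j + L) div p = a * p ^ j + L div p" unfolding e using assms
    by (subst div_mult_self1) auto
  have "L div p < p ^ j" using Suc.prems assms by (simp add: div_less_iff_less_mult mult.commute)
  hence "lep p (L div p) (a * p ^ j + L div p)" by (rule Suc.IH)
  thus ?case using lep_rec[of p L "a * p ^ Suc j + L"] assms m d by simp
qed

definition box :: "nat \<Rightarrow> 'b set \<Rightarrow> (nat \<Rightarrow> 'b::zero) set" where
  "box m A = {x. (\<forall>i<m. x i \<in> A) \<and> (\<forall>i\<ge>m. x i = 0)}"

lemma vecs_box: "vecs m = box m UNIV"
  unfolding vecs_def box_def by auto

lemma exps_box: "exps TYPE('a::{field,finite}) m = box m {..CARD('a) - 1}"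
  unfolding exps_def box_def by auto

lemma box_0: "box 0 A = {\<lambda>_. 0}"
  unfolding box_def by auto

lemma box_Suc: "box (Suc m) A = (\<lambda>(y,t). y(m := t)) ` (box m A \<times> A)"
proof
  show "box (Suc m) A \<subseteq> (\<lambda>(y,t). y(m := t)) ` (box m A \<times> A)"
  proof
    fix x assume x: "x \<in> box (Suc m) A"
    have "x = (\<lambda>(y,t). y(m := t)) (x(m := 0), x m)" by auto
    moreover have "(x(m := 0), x m) \<in> box m A \<times> A" using x unfolding box_def by auto
    ultimately show "x \<in> (\<lambda>(y,t). y(m := t)) ` (box m A \<times> A)" by blast
  qed
  show "(\<lambda>(y,t). y(m := t)) ` (box m A \<times> A) \<subseteq> box (Suc m) A"
    unfolding box_def by (auto simp: less_Suc_eq)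
qed

lemma box_inj: "inj_on (\<lambda>(y,t). y(m := t)) (box m A \<times> A)"
proof (rule inj_onI, clarsimp)
  fix y t y' t'
  assume H: "y \<in> box m A" "t \<in> A" "y' \<in> box m A" "t' \<in> A" "y(m := t) = y'(m := t')"
  have "t = t'" using fun_cong[OF H(5), of m] by simp
  moreover have "y = y'"
  proof
    fix i show "y i = y' i"
    proof (cases "i = m")
      case True thus ?thesis using H unfolding box_def by auto
    next
      case False thus ?thesis using fun_cong[OF H(5), of i] by simp
    qed
  qed
  ultimately show "y = y' \<and> t = t'" by simp
qed

lemma finite_box: "finite A \<Longrightarrow> finite (box m A)"
  by (induction m) (auto simp: box_0 box_Suc)

lemma box_sum_prod:
  fixes \<phi> :: "nat \<Rightarrow> 'b::zero \<Rightarrow> 'c::comm_semiring_1"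
  assumes "finite A"
  shows "(\<Sum>x\<in>box m A. \<Prod>i<m. \<phi> i (x i)) = (\<Prod>i<m. \<Sum>t\<in>A. \<phi> i t)"
proof (induction m)
  case 0 thus ?case by (simp add: box_0)
next
  case (Suc m)
  have "(\<Sum>x\<in>box (Suc m) A. \<Prod>i<Suc m. \<phi> i (x i)) =
        (\<Sum>yt\<in>box m A \<times> A. \<Prod>i<Suc m. \<phi> i (((\<lambda>(y,t). y(m := t)) yt) i))"
    unfolding box_Suc by (rule sum.reindex[OF box_inj, unfolded comp_def])
  also have "\<dots> = (\<Sum>yt\<in>box m A \<times> A. (\<Prod>i<m. \<phi> i (fst yt i)) * \<phi> m (snd yt))"
    by (intro sum.cong refl) (auto simp: prod.lessThan_Suc intro!: prod.cong)
  also have "\<dots> = (\<Sum>y\<in>box m A. \<Sum>t\<in>A. (\<Prod>i<m. \<phi> i (y i)) * \<phi> m t)"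
    by (subst sum.cartesian_product) (simp add: case_prod_beta)
  also have "\<dots> = (\<Sum>y\<in>box m A. \<Prod>i<m. \<phi> i (y i)) * (\<Sum>t\<in>A. \<phi> m t)"
    by (simp add: sum_product)
  also have "\<dots> = (\<Prod>i<Suc m. \<Sum>t\<in>A. \<phi> i t)" using Suc by (simp add: prod.lessThan_Suc)
  finally show ?case .
qed

lemma finite_vecs: "finite (vecs m :: (nat \<Rightarrow> 'a::{field,finite}) set)"
  unfolding vecs_box by (rule finite_box) simp

lemma finite_exps: "finite (exps TYPE('a::{field,finite}) m)"
  unfolding exps_box by (rule finite_box) simp

lemma vecs_sum_prod:
  fixes \<phi> :: "nat \<Rightarrow> 'a::{field,finite} \<Rightarrow> 'c::comm_semiring_1"
  shows "(\<Sum>x\<in>vecs m. \<Prod>i<m. \<phi> i (x i)) = (\<Prod>i<m. \<Sum>t\<in>UNIV. \<phi> i t)"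
  unfolding vecs_box by (rule box_sum_prod) simp

lemma exps_sum_prod:
  fixes \<phi> :: "nat \<Rightarrow> nat \<Rightarrow> 'c::comm_semiring_1"
  shows "(\<Sum>x\<in>exps TYPE('a::{field,finite}) m. \<Prod>i<m. \<phi> i (x i)) = (\<Prod>i<m. \<Sum>t\<le>CARD('a) - 1. \<phi> i t)"
  unfolding exps_box by (rule box_sum_prod) simp

lemma prod_indicator: "(\<Prod>i<(m::nat). if P i then 1 else (0::'c::comm_semiring_1)) = (if \<forall>i<m. P i then 1 else 0)"
  by (induction m) (auto simp: prod.lessThan_Suc less_Suc_eq)

definition W :: "nat \<Rightarrow> 'a::{field,finite} \<Rightarrow> 'a" where
  "W c t = (if c = 0 then 1 - t ^ (CARD('a) - 1) else - (t ^ (CARD('a) - 1 - c)))"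

lemma orth:
  assumes "t \<le> CARD('a::{field,finite}) - 1" "c \<le> CARD('a) - 1"
  shows "(\<Sum>z\<in>(UNIV::'a set). W c z * z ^ t) = (if t = c then 1 else 0)"
proof -
  define q1 where "q1 = CARD('a) - 1"
  have q2: "1 \<le> q1" unfolding q1_def using card_ge2[where 'a='a] by simp
  have W': "\<And>z::'a. W c z = (if c = 0 then 1 - z ^ q1 else - (z ^ (q1 - c)))"
    by (simp add: W_def q1_def)
  have PS: "\<And>m. (\<Sum>z\<in>(UNIV::'a set). z ^ m) = (if 0 < m \<and> q1 dvd m then -1 else 0)"
    unfolding q1_def by (rule powsum)
  have t: "t \<le> q1" "c \<le> q1" using assms unfolding q1_def by auto
  show ?thesis
  proof (cases "c = 0")
    case True
    have "(\<Sum>z\<in>(UNIV::'a set). W c z * z ^ t) = (\<Sum>z\<in>(UNIV::'a set). z ^ t - z ^ (q1 + t))"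
      unfolding W' using True by (intro sum.cong refl) (simp add: algebra_simps power_add)
    also have "\<dots> = (\<Sum>z\<in>(UNIV::'a set). z ^ t) - (\<Sum>z\<in>(UNIV::'a set). z ^ (q1 + t))"
      by (rule sum_subtractf)
    also have "\<dots> = (if t = c then 1 else 0)"
    proof (cases "t = 0")
      case True thus ?thesis using q2 \<open>c = 0\<close> by (simp add: PS ofnat_card)
    next
      case False
      have "q1 dvd (q1 + t) \<longleftrightarrow> q1 dvd t" by simp
      thus ?thesis using False \<open>c = 0\<close> q2 by (simp add: PS)
    qed
    finally show ?thesis .
  next
    case False
    define e where "e = q1 - c + t"
    have "(\<Sum>z\<in>(UNIV::'a set). W c z * z ^ t) = (\<Sum>z\<in>(UNIV::'a set). - (z ^ e))"
      by (intro sum.cong refl) (simp add: W' False e_def power_add)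
    also have "\<dots> = - (\<Sum>z\<in>(UNIV::'a set). z ^ e)" by (simp add: sum_negf)
    also have "\<dots> = (if 0 < e \<and> q1 dvd e then 1 else 0)" by (simp add: PS)
    also have "(0 < e \<and> q1 dvd e) \<longleftrightarrow> t = c"
    proof
      assume "t = c" thus "0 < e \<and> q1 dvd e" using q2 t unfolding e_def by auto
    next
      assume H: "0 < e \<and> q1 dvd e"
      then obtain k where k: "e = q1 * k" by blast
      have "e < q1 * 2" using t False unfolding e_def by simp
      hence "k < 2" using k by simp
      moreover have "k \<noteq> 0" using H k by auto
      ultimately have "k = 1" by simp
      thus "t = c" using k t False unfolding e_def by simp
    qed
    finally show ?thesis .
  qed
qed

lemma pow_q: "(x::'a::{field,finite}) ^ CARD('a) = x"
proof (cases "x = 0")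
  case True thus ?thesis using card_ge2[where 'a='a] by simp
next
  case False
  have "x ^ CARD('a) = x ^ (CARD('a) - 1) * x"
    using card_ge2[where 'a='a] by (metis One_nat_def Suc_pred' not_numeral_le_zero not_gr0 power_Suc2)
  thus ?thesis using pow_q1[OF False] by simp
qed

lemma interp:
  "(\<Sum>c\<le>CARD('a) - 1. W c u * v ^ c) = (if u = v then 1 else (0::'a::{field,finite}))"
proof -
  define q where "q = CARD('a)"
  have q2: "2 \<le> q" unfolding q_def by (rule card_ge2)
  have A: "{..q - 1} = {..<q}" using q2 by auto
  define G where "G = (\<Sum>c<q. u ^ (q - Suc c) * v ^ c)"
  have "(\<Sum>c\<le>CARD('a) - 1. W c u * v ^ c) = (\<Sum>c<q. (if c = 0 then 1 else 0) - u ^ (q - Suc c) * v ^ c)"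
    unfolding q_def[symmetric] A
    by (intro sum.cong refl) (simp add: W_def q_def)
  also have "\<dots> = 1 - G" unfolding G_def using q2 by (simp add: sum_subtractf)
  also have "\<dots> = (if u = v then 1 else 0)"
  proof (cases "u = v")
    case True
    have "G = of_nat q * u ^ (q - 1)" unfolding G_def True
      by (simp add: power_add[symmetric])
    thus ?thesis using True by (simp add: q_def ofnat_card)
  next
    case False
    have "v ^ q - u ^ q = (v - u) * G" unfolding G_def by (rule power_diff_sumr2)
    hence "(v - u) * 1 = (v - u) * G" using pow_q[of u] pow_q[of v] by (simp add: q_def)
    hence "G = 1" using False by (metis eq_iff_diff_eq_0 mult_left_cancel)
    thus ?thesis using False by simp
  qed
  finally show ?thesis .
qed

definition cf :: "nat \<Rightarrow> ((nat \<Rightarrow> 'a::{field,finite}) \<Rightarrow> 'a) \<Rightarrow> (nat \<Rightarrow> nat) \<Rightarrow> 'a" where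
  "cf n f e = (if e \<in> exps TYPE('a) n then (\<Sum>y\<in>vecs n. f y * (\<Prod>i<n. W (e i) (y i))) else 0)"

lemma exps_eq:
  assumes "e \<in> exps TYPE('a::{field,finite}) n" "e0 \<in> exps TYPE('a) n"
  shows "(\<forall>i<n. e i = e0 i) \<longleftrightarrow> e = e0"
  using assms unfolding exps_def by (auto simp: fun_eq_iff) (metis not_le)

lemma vecs_eq:
  assumes "x \<in> vecs n" "y \<in> vecs n"
  shows "(\<forall>i<n. x i = y i) \<longleftrightarrow> x = y"
  using assms unfolding vecs_def by (auto simp: fun_eq_iff) (metis not_le)

lemma dual:
  assumes "e \<in> exps TYPE('a::{field,finite}) n" "e0 \<in> exps TYPE('a) n"
  shows "(\<Sum>y\<in>vecs n. mono n e y * (\<Prod>i<n. W (e0 i) (y i::'a))) = (if e = e0 then 1 else 0)"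
proof -
  have "(\<Sum>y\<in>vecs n. mono n e y * (\<Prod>i<n. W (e0 i) (y i::'a))) =
        (\<Sum>y\<in>vecs n. \<Prod>i<n. W (e0 i) (y i) * y i ^ e i)"
    by (intro sum.cong refl) (simp add: mono_def prod.distrib mult.commute)
  also have "\<dots> = (\<Prod>i<n. \<Sum>t\<in>UNIV. W (e0 i) t * t ^ e i)" by (rule vecs_sum_prod)
  also have "\<dots> = (\<Prod>i<n. if e i = e0 i then 1 else 0)"
    using assms unfolding exps_def by (intro prod.cong refl orth) auto
  also have "\<dots> = (if e = e0 then 1 else 0)" by (simp add: prod_indicator exps_eq[OF assms])
  finally show ?thesis .
qed

lemma repr_exists:
  fixes f :: "(nat \<Rightarrow> 'a::{field,finite}) \<Rightarrow> 'a"
  assumes "x \<in> vecs n"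
  shows "f x = (\<Sum>e\<in>exps TYPE('a) n. cf n f e * mono n e x)"
proof -
  have "(\<Sum>e\<in>exps TYPE('a) n. cf n f e * mono n e x) =
        (\<Sum>e\<in>exps TYPE('a) n. \<Sum>y\<in>vecs n. f y * (\<Prod>i<n. W (e i) (y i) * x i ^ e i))"
    by (intro sum.cong refl) (simp add: cf_def mono_def sum_distrib_right prod.distrib mult.assoc)
  also have "\<dots> = (\<Sum>y\<in>vecs n. f y * (\<Sum>e\<in>exps TYPE('a) n. \<Prod>i<n. W (e i) (y i) * x i ^ e i))"
    by (subst sum.swap) (simp add: sum_distrib_left)
  also have "\<dots> = (\<Sum>y\<in>vecs n. f y * (\<Prod>i<n. \<Sum>c\<le>CARD('a) - 1. W c (y i) * x i ^ c))"
    by (subst exps_sum_prod) rule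
  also have "\<dots> = (\<Sum>y\<in>vecs n. f y * (if y = x then 1 else 0))"
  proof (intro sum.cong refl)
    fix y :: "nat \<Rightarrow> 'a" assume y: "y \<in> vecs n"
    have "(\<Prod>i<n. \<Sum>c\<le>CARD('a) - 1. W c (y i) * x i ^ c) = (\<Prod>i<n. if y i = x i then 1 else 0)"
      by (intro prod.cong refl) (rule interp)
    also have "\<dots> = (if y = x then 1 else 0)" by (simp add: prod_indicator vecs_eq[OF y assms])
    finally show "f y * (\<Prod>i<n. \<Sum>c\<le>CARD('a) - 1. W c (y i) * x i ^ c) = f y * (if y = x then 1 else 0)"
      by simp
  qed
  also have "\<dots> = f x" using assms by (simp add: if_distrib sum.delta[OF finite_vecs] cong: if_cong)
  finally show ?thesis by simp
qed

lemma repr_unique: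
  fixes f :: "(nat \<Rightarrow> 'a::{field,finite}) \<Rightarrow> 'a"
  assumes "\<forall>e. e \<notin> exps TYPE('a) n \<longrightarrow> C e = 0"
    and "\<forall>x\<in>vecs n. f x = (\<Sum>e\<in>exps TYPE('a) n. C e * mono n e x)"
  shows "C = cf n f"
proof
  fix e0
  show "C e0 = cf n f e0"
  proof (cases "e0 \<in> exps TYPE('a) n")
    case False thus ?thesis using assms(1) by (simp add: cf_def)
  next
    case True
    have "cf n f e0 = (\<Sum>y\<in>vecs n. (\<Sum>e\<in>exps TYPE('a) n. C e * mono n e y) * (\<Prod>i<n. W (e0 i) (y i)))"
      using True assms(2) by (simp add: cf_def)
    also have "\<dots> = (\<Sum>e\<in>exps TYPE('a) n. C e * (\<Sum>y\<in>vecs n. mono n e y * (\<Prod>i<n. W (e0 i) (y i))))"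
      by (simp add: sum_distrib_right sum_distrib_left mult.assoc sum.swap[of _ "vecs n"])
    also have "\<dots> = (\<Sum>e\<in>exps TYPE('a) n. C e * (if e = e0 then 1 else 0))"
      using True by (intro sum.cong refl) (simp add: dual)
    also have "\<dots> = C e0" using True by (simp add: if_distrib sum.delta[OF finite_exps] cong: if_cong)
    finally show ?thesis by simp
  qed
qed

lemma coeffs_cf: "Defs.coeffs n f = cf n (f :: (nat \<Rightarrow> 'a::{field,finite}) \<Rightarrow> 'a)"
  unfolding Defs.coeffs_def
proof (rule the_equality)
  show "(\<forall>e. e \<notin> exps TYPE('a) n \<longrightarrow> cf n f e = 0) \<and> (\<forall>x\<in>vecs n. f x = (\<Sum>e\<in>exps TYPE('a) n. cf n f e * mono n e x))"
  proof (intro conjI)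
    show "\<forall>e. e \<notin> exps TYPE('a) n \<longrightarrow> cf n f e = 0" by (simp add: cf_def)
    show "\<forall>x\<in>vecs n. f x = (\<Sum>e\<in>exps TYPE('a) n. cf n f e * mono n e x)"
      using repr_exists by blast
  qed
next
  fix C assume "(\<forall>e. e \<notin> exps TYPE('a) n \<longrightarrow> C e = 0) \<and> (\<forall>x\<in>vecs n. f x = (\<Sum>e\<in>exps TYPE('a) n. C e * mono n e x))"
  thus "C = cf n f" using repr_unique by blast
qed

lemma repr:
  fixes f :: "(nat \<Rightarrow> 'a::{field,finite}) \<Rightarrow> 'a"
  shows "x \<in> vecs n \<Longrightarrow> f x = (\<Sum>e\<in>exps TYPE('a) n. Defs.coeffs n f e * mono n e x)"
  unfolding coeffs_cf by (rule repr_exists)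

definition inF :: "nat \<Rightarrow> nat \<Rightarrow> ((nat \<Rightarrow> 'a::{field,finite}) \<Rightarrow> 'a) \<Rightarrow> ((nat \<Rightarrow> 'a) \<Rightarrow> 'a) \<Rightarrow> bool" where
  "inF m k h \<phi> \<longleftrightarrow> (\<forall>T\<in>affine_maps m k. inner k (\<phi> \<circ> T) h = 0)"

lemma affine_in_vecs: "affine m k A b x \<in> vecs m"
  unfolding affine_def vecs_def by simp

lemma affine_maps_vecs: "T \<in> affine_maps m k \<Longrightarrow> T x \<in> vecs m"
  unfolding affine_maps_def using affine_in_vecs by blast

lemma inF_cong:
  fixes \<phi> :: "(nat \<Rightarrow> 'a::{field,finite}) \<Rightarrow> 'a"
  assumes "inF m k h \<phi>" "\<And>z. z \<in> vecs m \<Longrightarrow> \<phi> z = \<psi> z"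
  shows "inF m k h \<psi>"
  unfolding inF_def
proof
  fix T :: "(nat \<Rightarrow> 'a) \<Rightarrow> nat \<Rightarrow> 'a" assume T: "T \<in> affine_maps m k"
  have "inner k (\<psi> \<circ> T) h = inner k (\<phi> \<circ> T) h"
    unfolding inner_def using assms(2) affine_maps_vecs[OF T] by simp
  thus "inner k (\<psi> \<circ> T) h = 0" using assms(1) T unfolding inF_def by simp
qed

lemma inF_sum:
  fixes \<phi> :: "'i \<Rightarrow> (nat \<Rightarrow> 'a::{field,finite}) \<Rightarrow> 'a"
  assumes "finite I" "\<And>i. i \<in> I \<Longrightarrow> inF m k h (\<phi> i)"
  shows "inF m k h (\<lambda>z. \<Sum>i\<in>I. c i * \<phi> i z)"
  unfolding inF_def
proof
  fix T :: "(nat \<Rightarrow> 'a) \<Rightarrow> nat \<Rightarrow> 'a" assume T: "T \<in> affine_maps m k"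
  have "inner k ((\<lambda>z. \<Sum>i\<in>I. c i * \<phi> i z) \<circ> T) h = (\<Sum>i\<in>I. c i * inner k (\<phi> i \<circ> T) h)"
    unfolding inner_def by (simp add: sum_distrib_right sum_distrib_left mult.assoc sum.swap[of _ I])
  also have "\<dots> = 0" using assms(2) T unfolding inF_def by simp
  finally show "inner k ((\<lambda>z. \<Sum>i\<in>I. c i * \<phi> i z) \<circ> T) h = 0" .
qed

lemma inF_scale:
  assumes "inF m k h \<phi>"
  shows "inF m k h (\<lambda>z. c * \<phi> z)"
  using inF_sum[of "{()}" m k h "\<lambda>_. \<phi>" "\<lambda>_. c"] assms by simp

lemma inF_unscale:
  assumes "inF m k h (\<lambda>z. c * \<phi> z)" "c \<noteq> 0"
  shows "inF m k h \<phi>"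
  using inF_scale[OF assms(1), of "inverse c"] assms(2) by (simp add: field_simps)

lemma affine_comp:
  "affine M N A1 b1 (affine N k A2 b2 y) =
   affine M k (\<lambda>r j. \<Sum>c<N. A1 r c * A2 c j) (\<lambda>r. (\<Sum>c<N. A1 r c * b2 c) + b1 r) y"
  unfolding affine_def
  by (auto simp: fun_eq_iff sum_distrib_left sum_distrib_right distrib_left sum.distrib mult.assoc
      intro!: sum.swap)

lemma inF_comp:
  fixes \<phi> :: "(nat \<Rightarrow> 'a::{field,finite}) \<Rightarrow> 'a"
  assumes "inF N k h \<phi>"
  shows "inF M k h (\<lambda>z. \<phi> (affine N M A b z))"
  unfolding inF_def
proof
  fix T :: "(nat \<Rightarrow> 'a) \<Rightarrow> nat \<Rightarrow> 'a" assume "T \<in> affine_maps M k"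
  then obtain A2 b2 where T: "T = affine M k A2 b2" unfolding affine_maps_def by blast
  have "(\<lambda>z. \<phi> (affine N M A b z)) \<circ> T = \<phi> \<circ> affine N k (\<lambda>r j. \<Sum>c<M. A r c * A2 c j) (\<lambda>r. (\<Sum>c<M. A r c * b2 c) + b r)"
    unfolding T by (simp add: fun_eq_iff affine_comp)
  moreover have "affine N k (\<lambda>r j. \<Sum>c<M. A r c * A2 c j) (\<lambda>r. (\<Sum>c<M. A r c * b2 c) + b r) \<in> affine_maps N k"
    unfolding affine_maps_def by blast
  ultimately show "inner k ((\<lambda>z. \<phi> (affine N M A b z)) \<circ> T) h = 0" using assms unfolding inF_def by simp
qed

lemma sum_delta_mult:
  "(\<Sum>c<(n::nat). (if r = c then a else 0) * (z c :: 'a::comm_semiring_1)) = (if r < n then a * z r else 0)"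
proof -
  have "(\<Sum>c<n. (if r = c then a else 0) * z c) = (\<Sum>c<n. if c = r then a * z r else 0)"
    by (intro sum.cong refl) auto
  thus ?thesis by simp
qed

lemma mextract:
  fixes f :: "(nat \<Rightarrow> 'a::{field,finite}) \<Rightarrow> 'a"
  assumes "inF n k h f" "\<forall>x\<in>vecs n. f x = (\<Sum>e\<in>exps TYPE('a) n. C e * mono n e x)"
    "e0 \<in> exps TYPE('a) n" "C e0 \<noteq> 0"
  shows "inF n k h (mono n e0)"
proof -
  define D :: "(nat \<Rightarrow> 'a) \<Rightarrow> (nat \<Rightarrow> 'a) \<Rightarrow> nat \<Rightarrow> 'a"
    where "D L = affine n n (\<lambda>r c. if r = c then L r else 0) (\<lambda>_. 0)" for L
  have Dz: "D L z = (\<lambda>r. if r < n then L r * z r else 0)" for L z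
    unfolding D_def affine_def by (simp add: fun_eq_iff sum_delta_mult)
  have monoD: "mono n e (D L z) = mono n e L * mono n e z" for e L z
    unfolding Dz mono_def by (simp add: power_mult_distrib prod.distrib)
  define G where "G z = (\<Sum>L\<in>vecs n. (\<Prod>i<n. W (e0 i) (L i)) * f (D L z))" for z
  have "inF n k h G" unfolding G_def D_def
    by (rule inF_sum[OF finite_vecs]) (rule inF_comp[OF assms(1)])
  moreover have "G z = C e0 * mono n e0 z" if z: "z \<in> vecs n" for z
  proof -
    have DV: "D L z \<in> vecs n" for L unfolding D_def by (rule affine_in_vecs)
    have "G z = (\<Sum>L\<in>vecs n. (\<Prod>i<n. W (e0 i) (L i)) * (\<Sum>e\<in>exps TYPE('a) n. C e * mono n e (D L z)))"
      unfolding G_def using assms(2) DV by (intro sum.cong refl) simp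
    also have "\<dots> = (\<Sum>L\<in>vecs n. (\<Prod>i<n. W (e0 i) (L i)) * (\<Sum>e\<in>exps TYPE('a) n. C e * (mono n e L * mono n e z)))"
      by (simp only: monoD)
    also have "\<dots> = (\<Sum>e\<in>exps TYPE('a) n. C e * mono n e z * (\<Sum>L\<in>vecs n. mono n e L * (\<Prod>i<n. W (e0 i) (L i))))"
      by (simp add: sum_distrib_left sum_distrib_right mult_ac sum.swap[of _ "vecs n"])
    also have "\<dots> = (\<Sum>e\<in>exps TYPE('a) n. C e * mono n e z * (if e = e0 then 1 else 0))"
      using assms(3) by (intro sum.cong refl) (simp add: dual)
    also have "\<dots> = C e0 * mono n e0 z" using assms(3) by (simp add: sum.delta[OF finite_exps] if_distrib cong: if_cong)
    finally show ?thesis .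
  qed
  ultimately have "inF n k h (\<lambda>z. C e0 * mono n e0 z)" by (rule inF_cong)
  thus ?thesis using assms(4) by (rule inF_unscale)
qed

lemma mono_split:
  assumes "j < m" "i < m" "j \<noteq> i"
  shows "mono m c z = z j ^ c j * z i ^ c i * (\<Prod>r\<in>{..<m}-{j,i}. z r ^ c r)"
proof -
  have "mono m c z = z j ^ c j * (\<Prod>r\<in>{..<m}-{j}. z r ^ c r)"
    unfolding mono_def using assms by (subst prod.remove[of _ j]) auto
  also have "(\<Prod>r\<in>{..<m}-{j}. z r ^ c r) = z i ^ c i * (\<Prod>r\<in>{..<m}-{j}-{i}. z r ^ c r)"
    using assms by (subst prod.remove[of _ i]) auto
  also have "{..<m}-{j}-{i} = {..<m}-{j,i}" by auto
  finally show ?thesis by (simp add: mult.assoc)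
qed

lemma sum_two_delta:
  assumes "j \<noteq> i" "j < m" "i < m"
  shows "(\<Sum>col<(m::nat). (if col = j then a else if col = i then 1 else 0) * (z col :: 'a::comm_ring_1)) = a * z j + z i"
proof -
  have "(\<Sum>col<m. (if col = j then a else if col = i then 1 else 0) * z col) =
        (\<Sum>col<m. (if col = j then a * z j else 0) + (if col = i then z i else 0))"
    using assms(1) by (intro sum.cong refl) auto
  also have "\<dots> = a * z j + z i" using assms by (simp add: sum.distrib)
  finally show ?thesis .
qed

lemma move:
  fixes h :: "(nat \<Rightarrow> 'a::{field,finite}) \<Rightarrow> 'a"
  assumes "inF m k h (mono m c)" "j < m" "i < m" "j \<noteq> i" "c j \<le> CARD('a) - 1"
    "lep p u (c j)" "prime p" "CHAR('a) = p"
  shows "inF m k h (mono m (c(j := c j - u, i := c i + u)))"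
proof -
  define N where "N = c j"
  define t0 where "t0 = N - u"
  have p1: "p > 1" using assms(7) prime_gt_1_nat by blast
  have uN: "u \<le> N" using lep_le[OF p1 assms(6)] unfolding N_def .
  define S :: "'a \<Rightarrow> (nat \<Rightarrow> 'a) \<Rightarrow> nat \<Rightarrow> 'a" where
    "S l = affine m m (\<lambda>r col. if r = j then (if col = j then l else if col = i then 1 else 0)
                               else (if r = col then 1 else 0)) (\<lambda>_. 0)" for l
  have Sz: "S l z = z(j := l * z j + z i)" if z: "z \<in> vecs m" for l z
  proof
    fix r show "S l z r = (z(j := l * z j + z i)) r"
    proof (cases "r < m")
      case False thus ?thesis using z assms(2) unfolding S_def affine_def vecs_def by auto
    next
      case True
      show ?thesis
      proof (cases "r = j")
        case True thus ?thesis using \<open>r < m\<close> assms(2-4) unfolding S_def affine_def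
          by (simp add: sum_two_delta)
      next
        case False thus ?thesis using \<open>r < m\<close> unfolding S_def affine_def by (simp add: sum_delta_mult)
      qed
    qed
  qed
  define P where "P z = (\<Prod>r\<in>{..<m}-{j,i}. z r ^ c r)" for z :: "nat \<Rightarrow> 'a"
  define F where "F t z = z j ^ t * z i ^ (N - t) * z i ^ c i * P z" for t z
  have monoS: "mono m c (S l z) = (\<Sum>t\<le>N. of_nat (N choose t) * l ^ t * F t z)" if z: "z \<in> vecs m" for l z
  proof -
    have "mono m c (S l z) = (l * z j + z i) ^ N * z i ^ c i * P z"
      unfolding Sz[OF z] mono_split[OF assms(2-4)] P_def N_def using assms(4)
      by (simp add: fun_upd_other)
    also have "(l * z j + z i) ^ N = (\<Sum>t\<le>N. of_nat (N choose t) * (l * z j) ^ t * z i ^ (N - t))"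
      by (rule binomial_ring)
    finally show ?thesis unfolding F_def
      by (simp add: sum_distrib_right sum_distrib_left power_mult_distrib mult_ac)
  qed
  define G where "G z = (\<Sum>l\<in>UNIV. W t0 l * mono m c (S l z))" for z
  have "inF m k h G" unfolding G_def S_def
    by (rule inF_sum, simp, rule inF_comp[OF assms(1)])
  moreover have "G z = of_nat (N choose t0) * F t0 z" if z: "z \<in> vecs m" for z
  proof -
    have "G z = (\<Sum>l\<in>UNIV. W t0 l * (\<Sum>t\<le>N. of_nat (N choose t) * l ^ t * F t z))"
      unfolding G_def using monoS[OF z] by simp
    also have "\<dots> = (\<Sum>t\<le>N. of_nat (N choose t) * F t z * (\<Sum>l\<in>UNIV. W t0 l * l ^ t))"
      by (simp add: sum_distrib_left sum_distrib_right mult_ac sum.swap[of _ UNIV])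
    also have "\<dots> = (\<Sum>t\<le>N. of_nat (N choose t) * F t z * (if t = t0 then 1 else 0))"
    proof (intro sum.cong refl)
      fix t assume "t \<in> {..N}"
      hence "t \<le> CARD('a) - 1" "t0 \<le> CARD('a) - 1" using assms(5) unfolding N_def t0_def by auto
      thus "of_nat (N choose t) * F t z * (\<Sum>l\<in>UNIV. W t0 l * l ^ t) = of_nat (N choose t) * F t z * (if t = t0 then 1 else 0)"
        by (simp add: orth)
    qed
    also have "\<dots> = of_nat (N choose t0) * F t0 z" unfolding t0_def
      by (simp add: if_distrib sum.delta cong: if_cong)
    finally show ?thesis .
  qed
  ultimately have "inF m k h (\<lambda>z. of_nat (N choose t0) * F t0 z)" by (rule inF_cong)
  moreover have "(of_nat (N choose t0) :: 'a) \<noteq> 0"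
  proof -
    have "N choose t0 = N choose u" unfolding t0_def using uN by (rule binomial_symmetric[symmetric])
    thus ?thesis using lucas[OF assms(7) assms(8) assms(6)] unfolding N_def by simp
  qed
  ultimately have "inF m k h (F t0)" by (rule inF_unscale)
  moreover have "F t0 z = mono m (c(j := c j - u, i := c i + u)) z" for z
  proof -
    have "mono m (c(j := c j - u, i := c i + u)) z = z j ^ (N - u) * z i ^ (c i + u) * P z"
      unfolding mono_split[OF assms(2-4)] P_def N_def using assms(4)
      by (auto intro!: prod.cong)
    thus ?thesis unfolding F_def t0_def using uN by (simp add: power_add mult_ac)
  qed
  ultimately show ?thesis by (rule inF_cong)
qed

definition ev :: "nat \<Rightarrow> ('a \<times> (nat \<Rightarrow> nat)) list \<Rightarrow> (nat \<Rightarrow> 'a) \<Rightarrow> 'a::comm_semiring_1" where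
  "ev k L y = sum_list (map (\<lambda>x. fst x * (\<Prod>j<k. y j ^ snd x j)) L)"

definition pdeg :: "nat \<Rightarrow> nat \<Rightarrow> ((nat \<Rightarrow> 'a::comm_semiring_1) \<Rightarrow> 'a) \<Rightarrow> bool" where
  "pdeg k D \<phi> \<longleftrightarrow> (\<exists>L. (\<forall>x\<in>set L. (\<Sum>j<k. snd x j) \<le> D) \<and> (\<forall>y. \<phi> y = ev k L y))"

lemma ev_append: "ev k (L1 @ L2) y = ev k L1 y + ev k L2 y"
  unfolding ev_def by simp

definition mulL :: "('a::comm_semiring_1 \<times> (nat \<Rightarrow> nat)) list \<Rightarrow> ('a \<times> (nat \<Rightarrow> nat)) list \<Rightarrow> ('a \<times> (nat \<Rightarrow> nat)) list" where
  "mulL L1 L2 = concat (map (\<lambda>a. map (\<lambda>b. (fst a * fst b, \<lambda>j. snd a j + snd b j)) L2) L1)"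

lemma ev_map1: "ev k (map (\<lambda>b. (fst a * fst b, \<lambda>j. snd a j + snd b j)) L2) y = fst a * (\<Prod>j<k. y j ^ snd a j) * ev k L2 y"
  by (induction L2) (simp_all add: ev_def power_add prod.distrib algebra_simps)

lemma ev_mulL: "ev k (mulL L1 L2) y = ev k L1 y * ev k L2 y"
proof (induction L1)
  case Nil thus ?case by (simp add: mulL_def ev_def)
next
  case (Cons a L1)
  have "ev k (mulL (a # L1) L2) y = ev k (map (\<lambda>b. (fst a * fst b, \<lambda>j. snd a j + snd b j)) L2) y + ev k (mulL L1 L2) y"
    by (simp add: mulL_def ev_append)
  also have "\<dots> = ev k (a # L1) y * ev k L2 y" unfolding ev_map1 Cons.IH by (simp add: ev_def algebra_simps)
  finally show ?case .
qed

lemma pdeg_const: "pdeg k D (\<lambda>y. c)"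
  unfolding pdeg_def by (rule exI[of _ "[(c, \<lambda>_. 0)]"]) (simp add: ev_def)

lemma pdeg_var: "j < k \<Longrightarrow> pdeg k 1 (\<lambda>y. y j)"
  unfolding pdeg_def
proof (rule exI[of _ "[(1, \<lambda>i. if i = j then 1 else (0::nat))]"], intro conjI allI ballI)
  assume "j < k"
  have s1: "(\<Sum>i<k. (if i = j then 1 else 0::nat)) = 1" using \<open>j < k\<close> by simp
  show "x \<in> set [(1::'a, \<lambda>i. if i = j then 1 else (0::nat))] \<Longrightarrow> (\<Sum>i<k. snd x i) \<le> 1" for x
    using s1 by simp
  show "y j = ev k [(1, \<lambda>i. if i = j then 1 else (0::nat))] y" for y
  proof -
    have "(\<Prod>i<k. y i ^ (if i = j then 1 else (0::nat))) = (\<Prod>i<k. if i = j then y j else 1)"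
      by (intro prod.cong refl) auto
    thus ?thesis using \<open>j < k\<close> by (simp add: ev_def)
  qed
qed

lemma pdeg_mono: "pdeg k D \<phi> \<Longrightarrow> D \<le> D' \<Longrightarrow> pdeg k D' \<phi>"
  unfolding pdeg_def by (meson le_trans)

lemma pdeg_cong: "pdeg k D \<phi> \<Longrightarrow> (\<And>y. \<phi> y = \<psi> y) \<Longrightarrow> pdeg k D \<psi>"
  unfolding pdeg_def by metis

lemma pdeg_add: "pdeg k D \<phi> \<Longrightarrow> pdeg k D \<psi> \<Longrightarrow> pdeg k D (\<lambda>y. \<phi> y + \<psi> y)"
  unfolding pdeg_def by (metis (no_types, lifting) Un_iff ev_append set_append)

lemma pdeg_mult:
  assumes "pdeg k D1 \<phi>" "pdeg k D2 \<psi>"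
  shows "pdeg k (D1 + D2) (\<lambda>y. \<phi> y * \<psi> y)"
proof -
  obtain L1 where L1: "\<forall>x\<in>set L1. (\<Sum>j<k. snd x j) \<le> D1" "\<forall>y. \<phi> y = ev k L1 y" using assms(1) unfolding pdeg_def by blast
  obtain L2 where L2: "\<forall>x\<in>set L2. (\<Sum>j<k. snd x j) \<le> D2" "\<forall>y. \<psi> y = ev k L2 y" using assms(2) unfolding pdeg_def by blast
  have "\<forall>x\<in>set (mulL L1 L2). (\<Sum>j<k. snd x j) \<le> D1 + D2"
    using L1(1) L2(1) by (auto simp: mulL_def sum.distrib add_mono)
  moreover have "\<forall>y. \<phi> y * \<psi> y = ev k (mulL L1 L2) y" using L1(2) L2(2) ev_mulL by metis
  ultimately show ?thesis unfolding pdeg_def by blast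
qed

lemma pdeg_scale: "pdeg k D \<phi> \<Longrightarrow> pdeg k D (\<lambda>y. c * \<phi> y)"
  using pdeg_mult[OF pdeg_const[of k 0 c]] by simp

lemma pdeg_sum:
  "finite I \<Longrightarrow> (\<And>i. i \<in> I \<Longrightarrow> pdeg k D (\<phi> i)) \<Longrightarrow> pdeg k D (\<lambda>y. \<Sum>i\<in>I. \<phi> i y)"
proof (induction I rule: finite_induct)
  case empty thus ?case by (simp add: pdeg_const)
next
  case (insert a I)
  thus ?case by (simp add: pdeg_add)
qed

lemma pdeg_prod:
  "finite I \<Longrightarrow> (\<And>i. i \<in> I \<Longrightarrow> pdeg k (d i) (\<phi> i)) \<Longrightarrow> pdeg k (\<Sum>i\<in>I. d i) (\<lambda>y. \<Prod>i\<in>I. \<phi> i y)"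
proof (induction I rule: finite_induct)
  case empty thus ?case by (simp add: pdeg_const)
next
  case (insert a I)
  thus ?case by (simp add: pdeg_mult)
qed

lemma pdeg_power: "pdeg k D \<phi> \<Longrightarrow> pdeg k (D * n) (\<lambda>y. \<phi> y ^ n)"
proof (induction n)
  case 0 thus ?case by (simp add: pdeg_const)
next
  case (Suc n)
  have "pdeg k (D + D * n) (\<lambda>y. \<phi> y * \<phi> y ^ n)" using Suc by (intro pdeg_mult) auto
  thus ?case by (simp add: algebra_simps)
qed

lemma sum_sum_list: "(\<Sum>y\<in>A. sum_list (map (\<lambda>x. g x y) L)) = sum_list (map (\<lambda>x. \<Sum>y\<in>A. g x y) L)"
  by (induction L) (simp_all add: sum.distrib)

lemma sum_list_zero: "(\<And>x. x \<in> set L \<Longrightarrow> g x = 0) \<Longrightarrow> sum_list (map g L) = (0::'a::monoid_add)"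
  by (induction L) auto

lemma vanish:
  fixes \<phi> :: "(nat \<Rightarrow> 'a::{field,finite}) \<Rightarrow> 'a"
  assumes "pdeg k D \<phi>" "D < (CARD('a) - 1) * k"
  shows "(\<Sum>y\<in>vecs k. \<phi> y) = 0"
proof -
  obtain L where L: "\<forall>x\<in>set L. (\<Sum>j<k. snd x j) \<le> D" "\<forall>y. \<phi> y = ev k L y" using assms(1) unfolding pdeg_def by blast
  have "(\<Sum>y\<in>vecs k. \<phi> y) = sum_list (map (\<lambda>x. \<Sum>y\<in>vecs k. fst x * (\<Prod>j<k. y j ^ snd x j)) L)"
    using L(2) unfolding ev_def by (simp add: sum_sum_list)
  also have "\<dots> = 0"
  proof (rule sum_list_zero)
    fix x assume x: "x \<in> set L"
    have "\<exists>j<k. snd x j < CARD('a) - 1"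
    proof (rule ccontr)
      assume "\<not> ?thesis"
      hence "(\<Sum>j<k. CARD('a) - 1) \<le> (\<Sum>j<k. snd x j)" by (intro sum_mono) (meson lessThan_iff not_less)
      moreover have "(\<Sum>j<k. snd x j) \<le> D" using L(1) x by blast
      ultimately show False using assms(2) by (simp add: mult.commute)
    qed
    then obtain j where j: "j < k" "snd x j < CARD('a) - 1" by blast
    have "(\<Sum>y\<in>vecs k. (\<Prod>j<k. y j ^ snd x j)) = (\<Prod>j<k. \<Sum>t\<in>UNIV. (t::'a) ^ snd x j)"
      by (rule vecs_sum_prod)
    also have "\<dots> = 0"
    proof (rule prod_zero)
      have "\<not> (0 < snd x j \<and> (CARD('a) - 1) dvd snd x j)" using j(2) by (auto dest: dvd_imp_le)
      hence "(\<Sum>t\<in>UNIV. (t::'a) ^ snd x j) = 0" by (simp only: powsum if_False)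
      thus "\<exists>a\<in>{..<k}. (\<Sum>t\<in>UNIV. (t::'a) ^ snd x a) = 0" using j(1) by blast
    qed simp
    finally show "(\<Sum>y\<in>vecs k. fst x * (\<Prod>j<k. y j ^ snd x j)) = 0" by (simp add: sum_distrib_left[symmetric])
  qed
  finally show ?thesis .
qed

lemma deg_ge:
  fixes f :: "(nat \<Rightarrow> 'a::{field,finite}) \<Rightarrow> 'a"
  assumes "e \<in> exps TYPE('a) n" "Defs.coeffs n f e \<noteq> 0"
  shows "(\<Sum>i<n. e i) \<le> deg n f"
proof -
  have fin: "finite {(\<Sum>i<n. e i) | e. e \<in> exps TYPE('a) n \<and> Defs.coeffs n f e \<noteq> 0}"
    by (rule finite_subset[OF _ finite_imageI[OF finite_exps[where 'a='a and m=n], of "\<lambda>e. \<Sum>i<n. e i"]]) auto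
  show ?thesis unfolding deg_def using assms by (intro Max_ge) (use fin in auto)
qed

lemma deg_gt:
  fixes f :: "(nat \<Rightarrow> 'a::{field,finite}) \<Rightarrow> 'a"
  assumes "d < deg n f"
  shows "\<exists>e\<in>exps TYPE('a) n. Defs.coeffs n f e \<noteq> 0 \<and> d < (\<Sum>i<n. e i)"
proof -
  define M where "M = {(\<Sum>i<n. e i) | e. e \<in> exps TYPE('a) n \<and> Defs.coeffs n f e \<noteq> 0}"
  have fin: "finite M" unfolding M_def
    by (rule finite_subset[OF _ finite_imageI[OF finite_exps[where 'a='a and m=n], of "\<lambda>e. \<Sum>i<n. e i"]]) auto
  have "deg n f \<in> insert 0 M" unfolding deg_def M_def[symmetric] using fin by (intro Max_in) auto
  moreover have "deg n f \<noteq> 0" using assms by simp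
  ultimately have "deg n f \<in> M" by simp
  thus ?thesis using assms unfolding M_def by auto
qed

lemma prod_split_add: "(\<Prod>i<(n::nat) + t. g i) = (\<Prod>i<n. g i) * (\<Prod>i<t. g (n + i))"
  by (induction t) (simp_all add: prod.lessThan_Suc mult.assoc)

lemma sum_split_add: "(\<Sum>i<(n::nat) + t. g i) = (\<Sum>i<n. g i) + (\<Sum>i<t. g (n + i))"
  by (induction t) (simp_all add: sum.lessThan_Suc add.assoc)

lemma sum_shape:
  assumes "(i::nat) \<le> K" "i < K"
  shows "(\<Sum>t<K. if t < i then X else if t = i then v else 0) = i * X + (v::nat)"
proof -
  have "(\<Sum>t<K. if t < i then X else if t = i then v else 0) = (\<Sum>t<K. (if t < i then X else 0) + (if t = i then v else 0))"
    by (intro sum.cong refl) auto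
  also have "\<dots> = (\<Sum>t<K. if t < i then X else 0) + v" using assms by (simp add: sum.distrib)
  also have "(\<Sum>t<K. if t < i then X else 0) = (\<Sum>t<i. X)"
    by (rule sum.mono_neutral_cong_right) (use assms in auto)
  finally show ?thesis by simp
qed

lemma dir1:
  fixes f h :: "(nat \<Rightarrow> 'a::{field,finite}) \<Rightarrow> 'a"
  assumes "deg n f \<le> d" "d + deg k h < (CARD('a) - 1) * k"
  shows "inF n k h f"
  unfolding inF_def
proof
  fix T :: "(nat \<Rightarrow> 'a) \<Rightarrow> nat \<Rightarrow> 'a" assume "T \<in> affine_maps n k"
  then obtain A b where T: "T = affine n k A b" unfolding affine_maps_def by blast
  define F1 where "F1 y = (\<Sum>e\<in>exps TYPE('a) n. Defs.coeffs n f e * mono n e (T y))" for y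
  define H1 where "H1 y = (\<Sum>e\<in>exps TYPE('a) k. Defs.coeffs k h e * mono k e y)" for y
  have coord: "pdeg k 1 (\<lambda>y. T y i)" if "i < n" for i
  proof -
    have "pdeg k 1 (\<lambda>y. (\<Sum>j<k. A i j * y j) + b i)"
      by (intro pdeg_add pdeg_sum pdeg_scale pdeg_var pdeg_const) auto
    thus ?thesis by (rule pdeg_cong) (simp add: T affine_def that)
  qed
  have pT: "pdeg k (\<Sum>i<n. e i) (\<lambda>y. mono n e (T y))" for e
  proof -
    have "pdeg k (\<Sum>i<n. 1 * e i) (\<lambda>y. \<Prod>i<n. T y i ^ e i)"
      by (intro pdeg_prod pdeg_power coord) auto
    thus ?thesis unfolding mono_def by simp
  qed
  have pM: "pdeg k (\<Sum>i<k. e i) (\<lambda>y. mono k e y)" for e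
  proof -
    have "pdeg k (\<Sum>i<k. 1 * e i) (\<lambda>y. \<Prod>i<k. y i ^ e i)"
      by (intro pdeg_prod pdeg_power pdeg_var) auto
    thus ?thesis unfolding mono_def by simp
  qed
  have "pdeg k d F1" unfolding F1_def
  proof (rule pdeg_sum[OF finite_exps])
    fix e assume e: "e \<in> exps TYPE('a) n"
    show "pdeg k d (\<lambda>y. Defs.coeffs n f e * mono n e (T y))"
    proof (cases "Defs.coeffs n f e = 0")
      case True thus ?thesis using pdeg_const[of k d 0] by simp
    next
      case False
      have "(\<Sum>i<n. e i) \<le> d" using deg_ge[OF e False] assms(1) by simp
      thus ?thesis by (intro pdeg_mono[OF pdeg_scale[OF pT]])
    qed
  qed
  moreover have "pdeg k (deg k h) H1" unfolding H1_def
  proof (rule pdeg_sum[OF finite_exps])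
    fix e assume e: "e \<in> exps TYPE('a) k"
    show "pdeg k (deg k h) (\<lambda>y. Defs.coeffs k h e * mono k e y)"
    proof (cases "Defs.coeffs k h e = 0")
      case True thus ?thesis using pdeg_const[of k "deg k h" 0] by simp
    next
      case False
      thus ?thesis by (intro pdeg_mono[OF pdeg_scale[OF pM]] deg_ge[OF e])
    qed
  qed
  ultimately have "pdeg k (d + deg k h) (\<lambda>y. F1 y * H1 y)" by (rule pdeg_mult)
  hence "(\<Sum>y\<in>vecs k. F1 y * H1 y) = 0" using assms(2) by (rule vanish)
  moreover have "inner k (f \<circ> T) h = (\<Sum>y\<in>vecs k. F1 y * H1 y)"
    unfolding inner_def F1_def H1_def
    by (intro sum.cong refl) (simp add: repr[symmetric] T affine_in_vecs)
  ultimately show "inner k (f \<circ> T) h = 0" by simp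
qed

lemma final:
  fixes h :: "(nat \<Rightarrow> 'a::{field,finite}) \<Rightarrow> 'a"
  assumes "s < k" "r \<le> v" "v < r + Q" "1 \<le> Q" "Q < CARD('a)" "r < CARD('a) - Q"
    "deg k h + (s * (CARD('a) - Q) + r) \<le> (CARD('a) - 1) * k"
    "contains k h (\<lambda>i. if i < s then Q - 1 else if i = s then CARD('a) - 1 - v else if i < k then CARD('a) - 1 else 0)"
  shows "inner k (mono k (\<lambda>i. if i < s then CARD('a) - Q else if i = s then v else 0)) h \<noteq> 0"
proof -
  define q where "q = CARD('a)"
  define a where "a = (\<lambda>i. if i < s then q - Q else if i = s then v else (0::nat))"
  define bs where "bs = (\<lambda>i. if i < s then Q - 1 else if i = s then q - 1 - v else if i < k then q - 1 else (0::nat))"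
  define C where "C = Defs.coeffs k h"
  define PS where "PS b = (\<Prod>i<k. \<Sum>t\<in>(UNIV::'a set). t ^ (a i + b i))" for b
  have q2: "2 \<le> q" unfolding q_def by (rule card_ge2)
  have Cbs: "C bs \<noteq> 0" using assms(8) unfolding contains_def C_def bs_def q_def by simp
  have abs: "a i + bs i = q - 1" if "i < k" for i
    using that assms(4,5,6) assms(3) unfolding a_def bs_def q_def by auto
  have ale: "a i \<le> q - 1" for i using assms(4,5,6) assms(3) unfolding a_def q_def by auto
  have bs_exps: "bs \<in> exps TYPE('a) k" unfolding exps_def bs_def q_def using assms(1,5) by auto
  have suma: "(\<Sum>i<k. a i) = s * (q - Q) + v" unfolding a_def
    by (rule sum_shape) (use assms(1) in auto)
  have "inner k (mono k a) h = (\<Sum>y\<in>vecs k. mono k a y * (\<Sum>b\<in>exps TYPE('a) k. C b * mono k b y))"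
    unfolding inner_def C_def by (intro sum.cong refl) (simp add: repr[symmetric])
  also have "\<dots> = (\<Sum>b\<in>exps TYPE('a) k. C b * (\<Sum>y\<in>vecs k. \<Prod>i<k. y i ^ (a i + b i)))"
    by (simp add: sum_distrib_left sum_distrib_right mult_ac sum.swap[of _ "vecs k"] mono_def power_add prod.distrib)
  also have "\<dots> = (\<Sum>b\<in>exps TYPE('a) k. C b * PS b)"
    unfolding PS_def by (intro sum.cong refl arg_cong2[where f="(*)"] vecs_sum_prod)
  also have "\<dots> = C bs * PS bs"
  proof -
    have zero: "C b * PS b = 0" if b: "b \<in> exps TYPE('a) k" "b \<noteq> bs" for b
    proof (rule ccontr)
      assume nz: "C b * PS b \<noteq> 0"
      hence Cb: "C b \<noteq> 0" and PSb: "PS b \<noteq> 0" by auto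
      have degb: "(\<Sum>i<k. b i) \<le> deg k h" using deg_ge[OF b(1)] Cb C_def by simp
      have mult: "0 < a i + b i \<and> (q - 1) dvd (a i + b i)" if "i < k" for i
      proof -
        have "(\<Sum>t\<in>(UNIV::'a set). t ^ (a i + b i)) \<noteq> 0"
          using PSb that unfolding PS_def by (metis (no_types, lifting) finite_lessThan lessThan_iff prod_zero)
        thus ?thesis using powsum[of "a i + b i", where 'a='a] unfolding q_def by (auto split: if_splits)
      qed
      have ge: "q - 1 \<le> a i + b i" if "i < k" for i using mult[OF that] by (auto dest: dvd_imp_le)
      obtain i0 where i0: "i0 < k" "b i0 \<noteq> bs i0" using b exps_eq[OF b(1) bs_exps] by auto
      have ne: "a i0 + b i0 \<noteq> q - 1" using abs[OF i0(1)] i0(2) by simp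
      have big: "2 * (q - 1) \<le> a i0 + b i0"
      proof -
        obtain t where t: "a i0 + b i0 = (q - 1) * t" using mult[OF i0(1)] by blast
        have "t \<noteq> 0" using t mult[OF i0(1)] by auto
        moreover have "t \<noteq> 1" using t ne by auto
        ultimately have "2 \<le> t" by simp
        hence "(q - 1) * 2 \<le> (q - 1) * t" by (rule mult_le_mono2)
        thus ?thesis using t by (simp add: mult.commute)
      qed
      have s1: "(\<Sum>i<k. a i + b i) = (a i0 + b i0) + (\<Sum>i\<in>{..<k}-{i0}. a i + b i)"
        using i0(1) by (subst sum.remove[of _ i0]) auto
      have s2: "(\<Sum>i\<in>{..<k}-{i0}. q - 1) \<le> (\<Sum>i\<in>{..<k}-{i0}. a i + b i)" using ge by (intro sum_mono) auto
      have s3: "(\<Sum>i\<in>{..<k}-{i0}. q - 1) = (k - 1) * (q - 1)" using i0(1) by simp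
      have gen: "x * k + x = 2 * x + (k - 1) * x" for x :: nat using i0(1) by (cases k) (simp_all add: algebra_simps)
      have s4: "(q - 1) * k + (q - 1) = 2 * (q - 1) + (k - 1) * (q - 1)" by (rule gen)
      have "(\<Sum>i<k. a i + b i) = (\<Sum>i<k. a i) + (\<Sum>i<k. b i)" by (rule sum.distrib)
      hence "(q - 1) * k + (q - 1) \<le> s * (q - Q) + v + deg k h" using s1 s2 s3 s4 big suma degb by linarith
      moreover have "deg k h + (s * (q - Q) + r) \<le> (q - 1) * k" using assms(7) unfolding q_def .
      ultimately show False using assms(3) assms(5) unfolding q_def by linarith
    qed
    have "(\<Sum>b\<in>exps TYPE('a) k. C b * PS b) = C bs * PS bs + (\<Sum>b\<in>exps TYPE('a) k - {bs}. C b * PS b)"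
      using bs_exps by (subst sum.remove[OF finite_exps]) auto
    also have "(\<Sum>b\<in>exps TYPE('a) k - {bs}. C b * PS b) = 0" using zero by (intro sum.neutral) auto
    finally show ?thesis by simp
  qed
  finally have E: "inner k (mono k a) h = C bs * PS bs" .
  have "PS bs = (\<Prod>i<k. \<Sum>t\<in>(UNIV::'a set). t ^ (q - 1))" unfolding PS_def using abs by simp
  also have "\<dots> = (\<Prod>i<k. -1)" using q2 by (simp add: powsum q_def)
  finally have "PS bs \<noteq> 0" by simp
  hence "inner k (mono k a) h \<noteq> 0" using E Cbs by simp
  thus ?thesis unfolding a_def q_def .
qed

lemma to_k:
  fixes h :: "(nat \<Rightarrow> 'a::{field,finite}) \<Rightarrow> 'a"
  assumes "inF (n + Suc s) k h (mono (n + Suc s) c)" "s < k" "\<forall>i<s. c (n + i) = X" "c (n + s) = v"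
  shows "inner k (mono k (\<lambda>i. if i < s then X else if i = s then v else 0)) h = 0"
proof -
  define M where "M = n + Suc s"
  define T where "T = affine M k (\<lambda>r col. if n \<le> r \<and> col = r - n then 1 else 0) (\<lambda>r. if r < n then 1 else (0::'a))"
  have Ty: "T y r = (if r < n then 1 else y (r - n))" if "r < M" for y r
  proof (cases "r < n")
    case True thus ?thesis using that unfolding T_def affine_def by simp
  next
    case False
    have "r - n < k" using that False assms(2) unfolding M_def by linarith
    have "(\<Sum>col<k. (if n \<le> r \<and> col = r - n then 1 else 0) * y col) = (\<Sum>col<k. if col = r - n then y (r - n) else 0)"
      using False by (intro sum.cong refl) auto
    also have "\<dots> = y (r - n)" using \<open>r - n < k\<close> by simp
    finally have "(\<Sum>col<k. (if n \<le> r \<and> col = r - n then 1 else 0) * y col) = y (r - n)" .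
    thus ?thesis using that False unfolding T_def affine_def by simp
  qed
  have eq: "mono M c (T y) = mono k (\<lambda>i. if i < s then X else if i = s then v else 0) y" for y
  proof -
    have "mono M c (T y) = (\<Prod>i<n. T y i ^ c i) * (\<Prod>i<Suc s. T y (n + i) ^ c (n + i))"
      unfolding mono_def M_def by (rule prod_split_add)
    also have "\<dots> = (\<Prod>i<Suc s. y i ^ c (n + i))"
      using Ty unfolding M_def by simp
    also have "\<dots> = (\<Prod>i<Suc s. y i ^ (if i < s then X else if i = s then v else 0))"
      using assms(3,4) by (intro prod.cong refl) (auto simp: less_Suc_eq)
    also have "\<dots> = (\<Prod>i<Suc s + (k - Suc s). y i ^ (if i < s then X else if i = s then v else 0))"
      by (subst prod_split_add, simp)
    also have "Suc s + (k - Suc s) = k" using assms(2) by simp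
    finally show ?thesis unfolding mono_def .
  qed
  have "T \<in> affine_maps M k" unfolding T_def affine_maps_def by blast
  hence "inner k (mono M c \<circ> T) h = 0" using assms(1) unfolding inF_def M_def by blast
  moreover have "mono M c \<circ> T = mono k (\<lambda>i. if i < s then X else if i = s then v else 0)"
    using eq by (simp add: fun_eq_iff)
  ultimately show ?thesis by simp
qed

lemma sum_move:
  fixes c :: "nat \<Rightarrow> nat"
  assumes "j < M" "i < M" "j \<noteq> i" "u \<le> c j"
  shows "(\<Sum>t<M. (c(j := c j - u, i := c i + u)) t) = (\<Sum>t<(M::nat). c t)"
proof -
  have "(\<Sum>t<M. (c(j := c j - u, i := c i + u)) t + (if t = j then u else 0)) = (\<Sum>t<M. c t + (if t = i then u else 0))"
    using assms by (intro sum.cong refl) (auto simp: le_add_diff_inverse2)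
  thus ?thesis using assms by (simp add: sum.distrib)
qed

lemma sum_move_src:
  fixes c :: "nat \<Rightarrow> nat"
  assumes "j < n" "n \<le> i" "u \<le> c j"
  shows "(\<Sum>t<n. (c(j := c j - u, i := c i + u)) t) + u = (\<Sum>t<(n::nat). c t)"
proof -
  have "(\<Sum>t<n. (c(j := c j - u, i := c i + u)) t + (if t = j then u else 0)) = (\<Sum>t<n. c t)"
    using assms by (intro sum.cong refl) (auto simp: le_add_diff_inverse2)
  thus ?thesis using assms by (simp add: sum.distrib)
qed

definition Inv :: "nat \<Rightarrow> nat \<Rightarrow> nat \<Rightarrow> nat \<Rightarrow> nat \<Rightarrow> ((nat \<Rightarrow> 'a::{field,finite}) \<Rightarrow> 'a) \<Rightarrow> (nat \<Rightarrow> nat) \<Rightarrow> nat \<Rightarrow> nat \<Rightarrow> bool" where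
  "Inv Q n s r k h c i v \<longleftrightarrow> inF (n + Suc s) k h (mono (n + Suc s) c) \<and> i \<le> s \<and> (\<forall>j<n. c j \<le> CARD('a) - 1)
     \<and> (\<forall>i'<i. c (n + i') = CARD('a) - Q) \<and> c (n + i) = v \<and> (\<forall>i'. i < i' \<and> i' \<le> s \<longrightarrow> c (n + i') = 0)
     \<and> v \<le> CARD('a) - 1 \<and> (i = s \<longrightarrow> v < r + Q) \<and> s * (CARD('a) - Q) + r \<le> (\<Sum>j<n + Suc s. c j)"

definition Good :: "nat \<Rightarrow> nat \<Rightarrow> nat \<Rightarrow> nat \<Rightarrow> nat \<Rightarrow> ((nat \<Rightarrow> 'a::{field,finite}) \<Rightarrow> 'a) \<Rightarrow> bool" where
  "Good Q n s r k h \<longleftrightarrow> (\<exists>c v. inF (n + Suc s) k h (mono (n + Suc s) c) \<and> (\<forall>i<s. c (n + i) = CARD('a) - Q)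
     \<and> c (n + s) = v \<and> r \<le> v \<and> v < r + Q)"

lemma main:
  fixes h :: "(nat \<Rightarrow> 'a::{field,finite}) \<Rightarrow> 'a"
  assumes P: "prime p" "CHAR('a) = p" "CARD('a) = p * Q" "Q = p ^ l'" "r < CARD('a) - Q"
  shows "Inv Q n s r k h c i v \<Longrightarrow> Good Q n s r k h"
proof (induction "(\<Sum>j<n. c j) + (s - i)" arbitrary: c i v rule: less_induct)
  case less
  define q where "q = CARD('a)"
  define M where "M = n + Suc s"
  have p1: "1 < p" using P(1) prime_gt_1_nat by blast
  have Q1: "1 \<le> Q" using P(4) p1 by simp
  have qQ: "q = p * Q" using P(3) q_def by simp
  have QltQ: "Q < q" using qQ p1 Q1 by simp
  have qQ': "q - Q = (p - 1) * Q" by (simp add: qQ diff_mult_distrib)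
  have qpow: "q = p ^ Suc l'" using qQ P(4) by simp
  have rq: "r < q - Q" using P(5) q_def by simp
  have I1: "inF M k h (mono M c)" and I2: "i \<le> s" and I3: "\<forall>j<n. c j \<le> q - 1"
    and I4: "\<forall>i'<i. c (n + i') = q - Q" and I5: "c (n + i) = v"
    and I6: "\<forall>i'. i < i' \<and> i' \<le> s \<longrightarrow> c (n + i') = 0" and I7: "v \<le> q - 1"
    and I8: "i = s \<longrightarrow> v < r + Q" and I9: "s * (q - Q) + r \<le> (\<Sum>j<M. c j)"
    using less.prems unfolding Inv_def q_def M_def by auto
  define th where "th = (if i < s then q - Q else r)"
  have "(i = s \<and> r \<le> v) \<or> (i < s \<and> q - Q \<le> v) \<or> v < th"
    using I2 unfolding th_def by (cases "i < s") (auto simp: not_le)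
  then consider (A) "i = s" "r \<le> v" | (B) "i < s" "q - Q \<le> v" | (C) "v < th" by blast
  then show ?case
  proof cases
    case A
    show ?thesis unfolding Good_def
      by (rule exI[of _ c], rule exI[of _ v]) (use A I1 I4 I5 I8 in \<open>auto simp: M_def q_def\<close>)
  next
    case B
    define L where "L = v - (q - Q)"
    have Lq: "L < Q" using I7 B QltQ unfolding L_def by linarith
    have vL: "v = (p - 1) * p ^ l' + L" using qQ' P(4) L_def B by simp
    have lepL: "lep p L (c (n + i))" using excess[OF p1 \<open>L < Q\<close>[unfolded P(4)], of "p - 1"] vL I5 by simp
    define c1 where "c1 = c(n + i := c (n + i) - L, n + Suc i := c (n + Suc i) + L)"
    have cnSi: "c (n + Suc i) = 0" using I6[rule_format, of "Suc i"] B by simp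
    have inF1: "inF M k h (mono M c1)" unfolding c1_def
      by (rule move[OF I1 _ _ _ _ lepL P(1) P(2)]) (use B I5 I7 in \<open>auto simp: M_def q_def\<close>)
    have Inv1: "Inv Q n s r k h c1 (Suc i) L"
      unfolding Inv_def
    proof (intro conjI)
      show "inF (n + Suc s) k h (mono (n + Suc s) c1)" using inF1 M_def by simp
      show "Suc i \<le> s" using B by simp
      show "\<forall>j<n. c1 j \<le> CARD('a) - 1" using I3 unfolding c1_def q_def by auto
      have Bq: "CARD('a) - Q \<le> v" using B q_def by simp
      show "\<forall>i'<Suc i. c1 (n + i') = CARD('a) - Q" using I4 I5 Bq B unfolding c1_def q_def L_def
        by (auto simp: less_Suc_eq)
      show "c1 (n + Suc i) = L" unfolding c1_def using cnSi by simp
      show "\<forall>i'. Suc i < i' \<and> i' \<le> s \<longrightarrow> c1 (n + i') = 0" using I6 unfolding c1_def by auto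
      show "L \<le> CARD('a) - 1" using Lq QltQ q_def by simp
      show "Suc i = s \<longrightarrow> L < r + Q" using Lq by simp
      have "(\<Sum>j<M. c1 j) = (\<Sum>j<M. c j)" unfolding c1_def
        by (rule sum_move) (use B I5 L_def in \<open>auto simp: M_def\<close>)
      thus "s * (CARD('a) - Q) + r \<le> (\<Sum>j<n + Suc s. c1 j)" using I9 q_def M_def by simp
    qed
    have src: "(\<Sum>j<n. c1 j) = (\<Sum>j<n. c j)" unfolding c1_def by (intro sum.cong refl) auto
    have "(\<Sum>j<n. c1 j) + (s - Suc i) < (\<Sum>j<n. c j) + (s - i)" using src B by simp
    thus ?thesis using less.hyps Inv1 by blast
  next
    case C
    have thle: "th \<le> q - Q" using rq by (auto simp: th_def)
    have ths: "i = s \<Longrightarrow> th = r" using I2 by (simp add: th_def)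
    have "\<exists>j<n. 0 < c j"
    proof (rule ccontr)
      assume "\<not> ?thesis" hence z: "\<forall>j<n. c j = 0" by auto
      have "(\<Sum>j<M. c j) = (\<Sum>j<n. c j) + (\<Sum>t<Suc s. c (n + t))" unfolding M_def by (rule sum_split_add)
      also have "(\<Sum>j<n. c j) = 0" using z by simp
      also have "(\<Sum>t<Suc s. c (n + t)) = (\<Sum>t<Suc s. if t < i then q - Q else if t = i then v else 0)"
      proof (intro sum.cong refl)
        fix t assume "t \<in> {..<Suc s}"
        thus "c (n + t) = (if t < i then q - Q else if t = i then v else 0)"
          using I4 I5 I6[rule_format, of t] by auto
      qed
      also have "\<dots> = i * (q - Q) + v" by (rule sum_shape) (use I2 in auto)
      finally have tot: "s * (q - Q) + r \<le> i * (q - Q) + v" using I9 by simp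
      show False
      proof (cases "i < s")
        case True
        hence "Suc i * (q - Q) \<le> s * (q - Q)" by (intro mult_le_mono1) simp
        hence "q - Q \<le> v" using tot by simp
        thus False using C True th_def by simp
      next
        case False
        hence "i = s" using I2 by simp
        thus False using tot C ths by simp
      qed
    qed
    then obtain j where j: "j < n" "0 < c j" by blast
    have cjq: "c j \<le> q - 1" using I3 j by simp
    have jM: "j < M" "n + i < M" "j \<noteq> n + i" using j I2 unfolding M_def by auto
    consider (full) "v + c j < th" | (part) "th \<le> v + c j" by linarith
    then show ?thesis
    proof cases
      case full
      define c1 where "c1 = c(j := c j - c j, n + i := c (n + i) + c j)"
      have inF1: "inF M k h (mono M c1)" unfolding c1_def
        by (rule move[OF I1 jM _ lep_refl P(1) P(2)]) (use cjq q_def in simp)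
      have Inv1: "Inv Q n s r k h c1 i (v + c j)"
        unfolding Inv_def
      proof (intro conjI)
        show "inF (n + Suc s) k h (mono (n + Suc s) c1)" using inF1 M_def by simp
        show "i \<le> s" by (rule I2)
        show "\<forall>j<n. c1 j \<le> CARD('a) - 1" using I3 unfolding c1_def q_def by auto
        show "\<forall>i'<i. c1 (n + i') = CARD('a) - Q" using I4 j unfolding c1_def q_def by auto
        show "c1 (n + i) = v + c j" unfolding c1_def using I5 by simp
        show "\<forall>i'. i < i' \<and> i' \<le> s \<longrightarrow> c1 (n + i') = 0" using I6 j unfolding c1_def by auto
        show "v + c j \<le> CARD('a) - 1" using full thle QltQ q_def by linarith
        show "i = s \<longrightarrow> v + c j < r + Q" using full ths by auto
        have "(\<Sum>j<M. c1 j) = (\<Sum>j<M. c j)" unfolding c1_def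
          by (rule sum_move) (use jM in auto)
        thus "s * (CARD('a) - Q) + r \<le> (\<Sum>j<n + Suc s. c1 j)" using I9 q_def M_def by simp
      qed
      have "(\<Sum>t<n. c1 t) + c j = (\<Sum>t<n. c t)" unfolding c1_def
        by (rule sum_move_src) (use j in auto)
      hence "(\<Sum>t<n. c1 t) + (s - i) < (\<Sum>t<n. c t) + (s - i)" using j by simp
      thus ?thesis using less.hyps Inv1 by blast
    next
      case part
      define w where "w = th - v"
      have w0: "0 < w" "w \<le> c j" using C part unfolding w_def by auto
      have "c j < p ^ Suc l'" using cjq qpow QltQ by simp
      then obtain u where u: "lep p u (c j)" "w \<le> u" "u < w + p ^ l'"
        using partial[OF p1 _ w0(1) w0(2)] by blast
      have ucj: "u \<le> c j" by (rule lep_le[OF p1 u(1)])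
      define c1 where "c1 = c(j := c j - u, n + i := c (n + i) + u)"
      have inF1: "inF M k h (mono M c1)" unfolding c1_def
        by (rule move[OF I1 jM _ u(1) P(1) P(2)]) (use cjq q_def in simp)
      have vu: "th \<le> v + u" "v + u < th + Q" using u(2,3) P(4) C unfolding w_def by auto
      have Inv1: "Inv Q n s r k h c1 i (v + u)"
        unfolding Inv_def
      proof (intro conjI)
        show "inF (n + Suc s) k h (mono (n + Suc s) c1)" using inF1 M_def by simp
        show "i \<le> s" by (rule I2)
        show "\<forall>j<n. c1 j \<le> CARD('a) - 1" using I3 unfolding c1_def q_def by auto
        show "\<forall>i'<i. c1 (n + i') = CARD('a) - Q" using I4 j unfolding c1_def q_def by auto
        show "c1 (n + i) = v + u" unfolding c1_def using I5 by simp
        show "\<forall>i'. i < i' \<and> i' \<le> s \<longrightarrow> c1 (n + i') = 0" using I6 j unfolding c1_def by auto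
        show "v + u \<le> CARD('a) - 1" using vu thle QltQ q_def by linarith
        show "i = s \<longrightarrow> v + u < r + Q" using vu ths by auto
        have "(\<Sum>j<M. c1 j) = (\<Sum>j<M. c j)" unfolding c1_def
          by (rule sum_move) (use jM ucj in auto)
        thus "s * (CARD('a) - Q) + r \<le> (\<Sum>j<n + Suc s. c1 j)" using I9 q_def M_def by simp
      qed
      have "(\<Sum>t<n. c1 t) + u = (\<Sum>t<n. c t)" unfolding c1_def
        by (rule sum_move_src) (use j ucj in auto)
      hence "(\<Sum>t<n. c1 t) + (s - i) < (\<Sum>t<n. c t) + (s - i)" using w0 u(2) by simp
      thus ?thesis using less.hyps Inv1 by blast
    qed
  qed
qed

theorem lemma4p1:
  fixes h :: "(nat \<Rightarrow> 'a::{field,finite}) \<Rightarrow> 'a"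
    and p l n d k s r :: nat
  assumes "prime p" and "CARD('a) = p ^ l"
    and "n > 0" and "d > 0" and "k > 0"
    and "d + 1 = s * (CARD('a) - CARD('a) div p) + r"
    and "r < CARD('a) - CARD('a) div p"
    and "s < k"
    and "h \<in> funs k"
    and "int (deg k h) \<le> (int CARD('a) - 1) * int k - (int d + 1)"
    and "\<forall>r'. r \<le> r' \<and> r' \<le> CARD('a) - 1 \<longrightarrow>
           contains k h (\<lambda>i. if i < s then CARD('a) div p - 1
                              else if i = s then CARD('a) - 1 - r'
                              else if i < k then CARD('a) - 1 else 0)"
  shows "RM n d = Fam n k h"
proof -
  define q where "q = CARD('a)"
  have p1: "1 < p" using assms(1) prime_gt_1_nat by blast
  have q2: "2 \<le> q" unfolding q_def by (rule card_ge2)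
  have l1: "l \<noteq> 0" using q2 assms(2) q_def by (cases l) auto
  define l' where "l' = l - 1"
  define Q where "Q = p ^ l'"
  have qQ: "q = p * Q" using assms(2) l1 unfolding q_def Q_def l'_def by (cases l) auto
  have Qdiv: "CARD('a) div p = Q" using qQ p1 q_def by simp
  have Q1: "1 \<le> Q" using p1 Q_def by simp
  have QltQ: "Q < q" using qQ p1 Q1 by simp
  have charp: "CHAR('a) = p"
  proof -
    have "of_nat CARD('a) = (0::'a)" by (rule ofnat_card)
    hence d1: "CHAR('a) dvd p ^ l" using of_nat_eq_0_iff_char_dvd assms(2) by metis
    have "finite (UNIV :: 'a set)" by simp
    hence "0 < CHAR('a)" by (rule finite_imp_CHAR_pos)
    hence pc: "prime CHAR('a)" by (rule prime_CHAR_semidom)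
    hence "CHAR('a) dvd p" using d1 prime_dvd_power by blast
    thus ?thesis using primes_dvd_imp_eq[OF pc assms(1)] by simp
  qed
  have hd: "d + 1 = s * (q - Q) + r" using assms(6) Qdiv q_def by simp
  have rq: "r < CARD('a) - Q" using assms(7) Qdiv by simp
  have degh: "deg k h + (d + 1) \<le> (q - 1) * k"
  proof -
    have A: "int (deg k h) \<le> (int q - 1) * int k - (int d + 1)" using assms(10) q_def by simp
    have B: "int ((q - 1) * k) = (int q - 1) * int k" using q2 by (simp add: of_nat_diff)
    have C: "int (deg k h + (d + 1)) = int (deg k h) + int d + 1" by simp
    have "int (deg k h + (d + 1)) \<le> int ((q - 1) * k)" using A B C by linarith
    thus ?thesis by (simp only: of_nat_le_iff)
  qed
  show ?thesis
  proof
    show "RM n d \<subseteq> Fam n k h"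
    proof
      fix f :: "(nat \<Rightarrow> 'a) \<Rightarrow> 'a" assume f: "f \<in> RM n d"
      have "inF n k h f"
        by (rule dir1) (use f degh in \<open>auto simp: RM_def q_def\<close>)
      thus "f \<in> Fam n k h" using f unfolding Fam_def RM_def inF_def by simp
    qed
  next
    show "Fam n k h \<subseteq> RM n d"
    proof
      fix f :: "(nat \<Rightarrow> 'a) \<Rightarrow> 'a" assume f: "f \<in> Fam n k h"
      have ff: "f \<in> funs n" and fF: "inF n k h f" using f unfolding Fam_def inF_def by auto
      have "deg n f \<le> d"
      proof (rule ccontr)
        assume "\<not> deg n f \<le> d"
        then obtain e where e: "e \<in> exps TYPE('a) n" "Defs.coeffs n f e \<noteq> 0" "d < (\<Sum>i<n. e i)"
          using deg_gt[of d n f] by auto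
        have rp: "\<forall>x\<in>vecs n. f x = (\<Sum>e\<in>exps TYPE('a) n. Defs.coeffs n f e * mono n e x)"
          using repr by blast
        have me: "inF n k h (mono n e)" by (rule mextract[OF fF rp e(1) e(2)])
        define c0 where "c0 = (\<lambda>j. if j < n then e j else 0)"
        have "inF (n + Suc s) k h (\<lambda>z. mono n e (affine n (n + Suc s) (\<lambda>r col. if r = col then 1 else 0) (\<lambda>_. 0) z))"
          by (rule inF_comp[OF me])
        hence inF0: "inF (n + Suc s) k h (mono (n + Suc s) c0)"
        proof (rule inF_cong)
          fix z :: "nat \<Rightarrow> 'a"
          have "mono n e (affine n (n + Suc s) (\<lambda>r col. if r = col then 1 else 0) (\<lambda>_. 0) z) = (\<Prod>i<n. z i ^ e i)"
            unfolding mono_def affine_def by (intro prod.cong refl) (simp add: sum_delta_mult)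
          also have "\<dots> = mono (n + Suc s) c0 z"
            unfolding mono_def c0_def by (subst prod_split_add) simp
          finally show "mono n e (affine n (n + Suc s) (\<lambda>r col. if r = col then 1 else 0) (\<lambda>_. 0) z) = mono (n + Suc s) c0 z" .
        qed
        have Inv0: "Inv Q n s r k h c0 0 0"
          unfolding Inv_def
        proof (intro conjI)
          show "inF (n + Suc s) k h (mono (n + Suc s) c0)" by (rule inF0)
          show "\<forall>j<n. c0 j \<le> CARD('a) - 1" using e(1) unfolding c0_def exps_def by auto
          show "0 = s \<longrightarrow> 0 < r + Q" using Q1 by simp
          have "(\<Sum>j<n + Suc s. c0 j) = (\<Sum>j<n. e j)" unfolding c0_def by (subst sum_split_add) simp
          thus "s * (CARD('a) - Q) + r \<le> (\<Sum>j<n + Suc s. c0 j)" using e(3) hd q_def by simp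
        qed (auto simp: c0_def)
        have "Good Q n s r k h"
          by (rule main[OF assms(1) charp _ Q_def rq Inv0]) (use qQ q_def in simp)
        then obtain c v where cv: "inF (n + Suc s) k h (mono (n + Suc s) c)" "\<forall>i<s. c (n + i) = CARD('a) - Q"
          "c (n + s) = v" "r \<le> v" "v < r + Q"
          unfolding Good_def by blast
        have "inner k (mono k (\<lambda>i. if i < s then CARD('a) - Q else if i = s then v else 0)) h = 0"
          by (rule to_k[OF cv(1) assms(8) cv(2) cv(3)])
        moreover have "inner k (mono k (\<lambda>i. if i < s then CARD('a) - Q else if i = s then v else 0)) h \<noteq> 0"
        proof (rule final[OF assms(8) cv(4) cv(5) Q1])
          show "Q < CARD('a)" using QltQ q_def by simp
          show "r < CARD('a) - Q" by (rule rq)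
          show "deg k h + (s * (CARD('a) - Q) + r) \<le> (CARD('a) - 1) * k" using degh hd q_def by simp
          have "v \<le> CARD('a) - 1" using cv(5) rq by linarith
          thus "contains k h (\<lambda>i. if i < s then Q - 1 else if i = s then CARD('a) - 1 - v else if i < k then CARD('a) - 1 else 0)"
            using assms(11) cv(4) Qdiv by auto
        qed
        ultimately show False by simp
      qed
      thus "f \<in> RM n d" using ff unfolding RM_def by simp
    qed
  qed
qed

end
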